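(* Assume the hypotheses of Theorem 2 (A1, A2, A3(D), $\beta\in[0,1)$, $0<\eta<2N/(\sigma_{\max}^2H_{\ell^{-1}(N\mathcal{L}(w(1)))})$) and that the dataset is generic as described in the context. Let $\tilde w$ be any vector with $\frac{\eta}{N}e^{-\langle x_i,\tilde w\rangle}=v_i$ for all $x_i\in S_s$. For $t\ge1$ define $r(t)=w(t)-\ln(t)\hat w-\tilde w$ and $$g(t)=\tfrac12\|r(t)\|^2+\tfrac{\beta}{1-\beta}\langle r(t),w(t)-w(t-1)\rangle-\tfrac{\beta}{1-\beta}\sum_{\tau=2}^t\langle r(\tau)-r(\tau-1),w(\tau)-w(\tau-1)\rangle,$$ where $w(0)=w(1)$ and $w(t)$ are the GDM iterates. Then: (i) $\sup_t\|r(t)\|<\infty$ if and only if $\sup_tg(t)<\infty$; (ii) $\sup_{T}\sum_{t=1}^{T}(g(t+1)-g(t))<\infty$; in particular $g$ is bounded above and hence $\sup_t\|r(t)\|<\infty$.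
   Context: Setting. The data are $S=\{x_1,\dots,x_N\}\subset\mathbb{R}^d$, with labels absorbed. The empirical loss is $\mathcal{L}(w)=\frac1N\sum_i\ell(\langle w,x_i\rangle)$. $\sigma_{\max}$ is the spectral norm of $(x_1,\dots,x_N)$. A1: there is $w$ with $\langle w,x_i\rangle>0$ for all $i$. A2: $\ell$ is differentiable, $\ell'<0$, $\ell(x),\ell'(x)\to0$ as $x\to\infty$, and $\limsup_{x\to-\infty}\ell'(x)<0$. There are positive $\mu_\pm,x_\pm$ with $-\ell'(x)\le(1+e^{-\mu_+x})e^{-x}$ for $x>x_+$ and $-\ell'(x)\ge(1-e^{-\mu_-x})e^{-x}$ for $x>x_-$. $\ell^{-1}$ is the inverse of $\ell:\mathbb{R}\to(0,\infty)$. A3(D): $H_{s_0}$ is the smallest constant with $|\ell'(x)-\ell'(y)|\le H_{s_0}|x-y|$ for $x,y\ge s_0$ (finite for every $s_0$). Max-margin: $\hat w=\arg\min\{\|w\|^2:\langle w,x_i\rangle\ge1\ \forall i\}$. The support set is $S_s=\{x_i:\langle x_i,\hat w\rangle=1\}$. Generic dataset: the dataset lies outside a Lebesgue-null set of $\mathbb{R}^{d\times N}$. For such datasets, every $d$ data points are linearly independent and there is a unique vector $v=(v_1,\dots,v_N)$ with $\hat w=\sum_iv_ix_i$, $v_i>0$ for $x_i\in S_s$ and $v_i=0$ otherwise. In particular $|S_s|\le d$, so a vector $\tilde w$ as in the claim exists. GDM: $m(0)=0$, $m(t)=\beta m(t-1)+(1-\beta)\nabla\mathcal{L}(w(t))$,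 $w(t+1)=w(t)-\eta m(t)$. *)

theory Defs
  imports "HOL-Analysis.Analysis"
begin

text \<open>Data: a family X :: 'n \<Rightarrow> real^'d of N = CARD('n) points in R^d (labels absorbed).
  The loss is l with derivative l'.\<close>

definition emp_loss :: "(real \<Rightarrow> real) \<Rightarrow> ('n::finite \<Rightarrow> real^'d) \<Rightarrow> real^'d \<Rightarrow> real" where
  "emp_loss l X w = (1 / real CARD('n)) * (\<Sum>i\<in>UNIV. l (w \<bullet> X i))"

definition emp_grad :: "(real \<Rightarrow> real) \<Rightarrow> ('n::finite \<Rightarrow> real^'d) \<Rightarrow> real^'d \<Rightarrow> real^'d" where
  "emp_grad l' X w = (1 / real CARD('n)) *\<^sub>R (\<Sum>i\<in>UNIV. l' (w \<bullet> X i) *\<^sub>R X i)"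

text \<open>Spectral norm of the d x N matrix (x_1,...,x_N), i.e. operator norm of c \<mapsto> \<Sum> c_i x_i.\<close>
definition sigma_max :: "('n::finite \<Rightarrow> real^'d) \<Rightarrow> real" where
  "sigma_max X = onorm (\<lambda>c::real^'n. \<Sum>i\<in>UNIV. (c $ i) *\<^sub>R X i)"

definition lip_H :: "(real \<Rightarrow> real) \<Rightarrow> real \<Rightarrow> real" where
  "lip_H l' s0 = Inf {C. C \<ge> 0 \<and> (\<forall>x y. x \<ge> s0 \<longrightarrow> y \<ge> s0 \<longrightarrow> \<bar>l' x - l' y\<bar> \<le> C * \<bar>x - y\<bar>)}"

definition max_margin :: "('n::finite \<Rightarrow> real^'d) \<Rightarrow> real^'d" where
  "max_margin X = (THE w. (\<forall>i. w \<bullet> X i \<ge> 1) \<and>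
      (\<forall>u. (\<forall>i. u \<bullet> X i \<ge> 1) \<longrightarrow> norm w ^ 2 \<le> norm u ^ 2))"

definition support_set :: "('n::finite \<Rightarrow> real^'d) \<Rightarrow> 'n set" where
  "support_set X = {i. X i \<bullet> max_margin X = 1}"

text \<open>GDM state (w(t), m(t)): m(0) = 0, w(t+1) = w(t) - \<eta> m(t),
  m(t) = \<beta> m(t-1) + (1-\<beta>) grad L(w(t)). The initial point is w(0) = w0 (so w(1) = w(0)).\<close>
fun gdm_state :: "(real \<Rightarrow> real) \<Rightarrow> ('n::finite \<Rightarrow> real^'d) \<Rightarrow> real \<Rightarrow> real \<Rightarrow> real^'d \<Rightarrow> nat
    \<Rightarrow> (real^'d) \<times> (real^'d)" where
  "gdm_state l' X \<beta> \<eta> w0 0 = (w0, 0)"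
| "gdm_state l' X \<beta> \<eta> w0 (Suc t) =
     (let (w, m) = gdm_state l' X \<beta> \<eta> w0 t; w' = w - \<eta> *\<^sub>R m
      in (w', \<beta> *\<^sub>R m + (1 - \<beta>) *\<^sub>R emp_grad l' X w'))"

definition gdm_w :: "(real \<Rightarrow> real) \<Rightarrow> ('n::finite \<Rightarrow> real^'d) \<Rightarrow> real \<Rightarrow> real \<Rightarrow> real^'d \<Rightarrow> nat \<Rightarrow> real^'d" where
  "gdm_w l' X \<beta> \<eta> w0 t = fst (gdm_state l' X \<beta> \<eta> w0 t)"

definition res_r :: "(real \<Rightarrow> real) \<Rightarrow> ('n::finite \<Rightarrow> real^'d) \<Rightarrow> real \<Rightarrow> real \<Rightarrow> real^'d \<Rightarrow> real^'d \<Rightarrow> nat \<Rightarrow> real^'d" where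
  "res_r l' X \<beta> \<eta> w0 wt t = gdm_w l' X \<beta> \<eta> w0 t - ln (real t) *\<^sub>R max_margin X - wt"

definition pot_g :: "(real \<Rightarrow> real) \<Rightarrow> ('n::finite \<Rightarrow> real^'d) \<Rightarrow> real \<Rightarrow> real \<Rightarrow> real^'d \<Rightarrow> real^'d \<Rightarrow> nat \<Rightarrow> real" where
  "pot_g l' X \<beta> \<eta> w0 wt t =
     (let r = res_r l' X \<beta> \<eta> w0 wt; w = gdm_w l' X \<beta> \<eta> w0 in
      (1/2) * norm (r t) ^ 2 + (\<beta> / (1 - \<beta>)) * (r t \<bullet> (w t - w (t - 1)))
      - (\<beta> / (1 - \<beta>)) * (\<Sum>\<tau>=2..t. (r \<tau> - r (\<tau> - 1)) \<bullet> (w \<tau> - w (\<tau> - 1))))"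

end

theory Submission
  imports Defs
begin


lemma ue_le1: "u * exp (- u) \<le> (1::real)"
proof -
  have "u \<le> exp u" using exp_ge_add_one_self[of u] by linarith
  then have "u * exp (-u) \<le> exp u * exp (-u)" by (intro mult_right_mono) auto
  then show ?thesis by (simp add: exp_minus)
qed

lemma exp_shift: "t > 0 \<Longrightarrow> exp (- (1 + \<mu>) * ln t) = exp (- \<mu> * ln t) / (t::real)"
proof -
  assume t: "t > 0"
  have "- (1 + \<mu>) * ln t = - \<mu> * ln t - ln t" by (simp add: algebra_simps)
  then show ?thesis using t by (simp add: exp_diff)
qed

lemma bound_nonsv:
  fixes y u m t a \<theta> :: real
  assumes "0 < y" "y \<le> 2 * exp (- m)" "m = ln t * \<theta> + a + u" "t > 0"
  shows "y * u \<le> 2 * exp (- a) * exp (- \<theta> * ln t)"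
proof (cases "u \<le> 0")
  case True
  then have "y * u \<le> 0" using assms(1) by (simp add: mult_nonneg_nonpos)
  then show ?thesis by (smt (verit) exp_gt_zero mult_pos_pos)
next
  case False
  then have "y * u \<le> 2 * exp (- m) * u" using assms by (intro mult_right_mono) auto
  also have "\<dots> = 2 * exp (- a) * exp (- \<theta> * ln t) * (u * exp (- u))"
    using assms(3) by (simp add: exp_add[symmetric] exp_minus[symmetric] algebra_simps)
  also have "\<dots> \<le> 2 * exp (- a) * exp (- \<theta> * ln t) * 1"
    by (intro mult_left_mono ue_le1) auto
  finally show ?thesis by simp
qed

lemma delta_bounds:
  fixes t :: real assumes "t \<ge> 1"
  shows "ln (t + 1) - ln t \<le> 1 / t" "1 / (t + 1) \<le> ln (t + 1) - ln t"
proof -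
  have e: "ln (t + 1) - ln t = ln (1 + 1 / t)"
  proof -
    have "1 + 1 / t = (t + 1) / t" using assms by (simp add: field_simps)
    then show ?thesis using assms by (simp add: ln_div)
  qed
  show "ln (t + 1) - ln t \<le> 1 / t" unfolding e using assms by (intro ln_add_one_self_le_self) simp
  have "ln (t / (t + 1)) \<le> t / (t + 1) - 1" using assms by (intro ln_le_minus_one) simp
  also have "t / (t + 1) - 1 = - (1 / (t + 1))" using assms by (simp add: field_simps)
  finally have "ln t - ln (t + 1) \<le> - (1 / (t + 1))" using assms by (simp add: ln_div)
  then show "1 / (t + 1) \<le> ln (t + 1) - ln t" by simp
qed

lemma bound_sv_pos:
  fixes y u m t a \<mu> K v \<delta> :: real
  assumes y: "y \<le> (1 + exp (- \<mu> * m)) * exp (- m)" and u: "u \<ge> 0"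
    and m: "m = ln t + a + u" and t: "t \<ge> 1" and \<mu>: "\<mu> > 0"
    and K: "K > 0" "K * exp (- a) = v" and \<delta>: "1 / (t + 1) \<le> \<delta>"
  shows "K * y * u - \<delta> * v * u \<le> v * (exp (- \<mu> * a) * exp (- (1 + \<mu>) * ln t) + 1 / t^2)"
proof -
  have v: "v > 0" using K by auto
  have tp: "t > 0" using t by simp
  have em: "K * exp (- m) = v * exp (- u) / t"
  proof -
    have "exp (- m) = exp (- a) * exp (- u) / t" using m tp by (simp add: exp_diff exp_add exp_minus field_simps)
    then show ?thesis using K by (simp add: field_simps)
  qed
  have emu: "exp (- \<mu> * m) \<le> exp (- \<mu> * a) * exp (- \<mu> * ln t)"
  proof -
    have "- \<mu> * m \<le> - \<mu> * a + - \<mu> * ln t" using m u \<mu> by (simp add: algebra_simps)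
    then show ?thesis by (simp add: exp_add[symmetric])
  qed
  have "K * y * u \<le> K * ((1 + exp (- \<mu> * m)) * exp (- m)) * u"
    using y u K by (intro mult_right_mono mult_left_mono) auto
  also have "\<dots> = (K * exp (- m)) * (u * (1 + exp (- \<mu> * m)))" by (simp add: algebra_simps)
  also have "\<dots> = (v * exp (- u) / t) * (u * (1 + exp (- \<mu> * m)))" by (simp only: em)
  also have "\<dots> = (v / t) * (u * exp (- u)) * (1 + exp (- \<mu> * m))" by (simp add: algebra_simps add_divide_distrib)
  also have "\<dots> \<le> (v / t) * (u * exp (- u)) * (1 + exp (- \<mu> * a) * exp (- \<mu> * ln t))"
    using emu v tp u by (intro mult_left_mono) auto
  also have "\<dots> = (v / t) * (u * exp (- u)) + (v / t) * (u * exp (- u)) * (exp (- \<mu> * a) * exp (- \<mu> * ln t))"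
    by (simp add: algebra_simps)
  also have "(v / t) * (u * exp (- u)) * (exp (- \<mu> * a) * exp (- \<mu> * ln t)) \<le> (v / t) * 1 * (exp (- \<mu> * a) * exp (- \<mu> * ln t))"
    using v tp by (intro mult_right_mono mult_left_mono ue_le1) auto
  also have "(v / t) * 1 * (exp (- \<mu> * a) * exp (- \<mu> * ln t)) = v * (exp (- \<mu> * a) * exp (- (1 + \<mu>) * ln t))"
    unfolding exp_shift[OF tp] by simp
  finally have A: "K * y * u \<le> (v / t) * (u * exp (- u)) + v * (exp (- \<mu> * a) * exp (- (1 + \<mu>) * ln t))" by simp
  have B: "\<delta> * v * u \<ge> u / (t + 1) * v"
  proof -
    have "1 / (t + 1) * (v * u) \<le> \<delta> * (v * u)" using \<delta> v u by (intro mult_right_mono) auto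
    then show ?thesis by (simp add: algebra_simps)
  qed
  have C: "(v / t) * (u * exp (- u)) - u / (t + 1) * v \<le> v * (1 / t^2)"
  proof (cases "u \<le> 1")
    case True
    have "u * exp (-u) \<le> u" using u by (simp add: mult_left_le)
    then have "(v / t) * (u * exp (- u)) \<le> (v / t) * u" using v tp by (intro mult_left_mono) auto
    moreover have "(v / t) * u - u / (t + 1) * v = v * (u / (t * (t + 1)))" using tp by (simp add: field_simps)
    moreover have "u / (t * (t + 1)) \<le> 1 / t^2"
    proof -
      have "u / (t * (t + 1)) \<le> 1 / (t * (t + 1))" using True tp by (intro divide_right_mono) auto
      also have "\<dots> \<le> 1 / t^2" using tp by (intro divide_left_mono) (auto simp: power2_eq_square)
      finally show ?thesis .
    qed
    moreover have "v * (u / (t * (t + 1))) \<le> v * (1 / t^2)" using v \<open>u / (t * (t + 1)) \<le> 1 / t^2\<close> by (intro mult_left_mono) auto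
    ultimately show ?thesis by linarith
  next
    case False
    have "exp (- u) \<le> exp (-1)" using False by simp
    also have "exp (-1::real) \<le> 1 / 2"
    proof -
      have "2 \<le> exp (1::real)" using exp_ge_add_one_self[of 1] by simp
      then show ?thesis by (simp add: exp_minus field_simps)
    qed
    finally have "u * exp (- u) \<le> u / 2" using False by (simp add: mult_left_mono)
    then have "(v / t) * (u * exp (- u)) \<le> (v / t) * (u / 2)" using v tp by (intro mult_left_mono) auto
    moreover have "(v / t) * (u / 2) \<le> u / (t + 1) * v" using v tp t u by (simp add: field_simps) (metis mult_1 mult_right_mono mult_nonneg_nonneg less_imp_le)
    moreover have "0 \<le> v * (1 / t^2)" using v by simp
    ultimately show ?thesis by linarith
  qed
  show ?thesis using A B C by (simp add: algebra_simps)
qed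


lemma em_lemma:
  fixes K a v m t u :: real
  assumes "K * exp (- a) = v" "m = ln t + a + u" "t > 0"
  shows "K * exp (- m) = v * exp (- u) / t"
proof -
  have "exp (- m) = exp (- a) * exp (- u) / t" using assms by (simp add: exp_diff exp_add exp_minus field_simps)
  then show ?thesis using assms by (simp add: field_simps)
qed

lemma bound_sv_neg:
  fixes y u m t a \<mu> K v \<delta> :: real
  assumes y: "(1 - exp (- \<mu> * m)) * exp (- m) \<le> y" and u: "u < 0"
    and m: "m = ln t + a + u" and t: "t \<ge> 1" and \<mu>: "\<mu> > 0"
    and K: "K > 0" "K * exp (- a) = v" and \<delta>: "\<delta> \<le> 1 / t" "0 \<le> \<delta>"
    and half: "exp (- \<mu> * m) \<le> 1 / 2"
  shows "K * y * u - \<delta> * v * u \<le> v * (exp (1 + \<mu>) * exp (- \<mu> * a) * exp (- (1 + \<mu>) * ln t))"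
proof -
  define E where "E = exp (- \<mu> * m)"
  define b where "b = - u"
  have b: "b > 0" using u by (simp add: b_def)
  have v: "v > 0" using K by auto
  have tp: "t > 0" using t by simp
  have em: "K * exp (- m) = v * exp b / t" using em_lemma[OF K(2) m tp] by (simp add: b_def)
  have "K * y * u \<le> K * ((1 - E) * exp (- m)) * u"
    using y u K by (intro mult_right_mono_neg mult_left_mono) (auto simp: E_def)
  also have "\<dots> = (K * exp (- m)) * ((1 - E) * u)" by (simp add: algebra_simps)
  also have "\<dots> = (v * exp b / t) * ((1 - E) * u)" by (simp only: em)
  finally have A: "K * y * u \<le> - (v / t) * b * (exp b * (1 - E))" by (simp add: b_def algebra_simps diff_divide_distrib)
  have B: "- (\<delta> * v * u) \<le> (v / t) * b"
  proof -
    have "\<delta> * (v * b) \<le> 1 / t * (v * b)" using \<delta> v b by (intro mult_right_mono) auto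
    then show ?thesis by (simp add: b_def algebra_simps)
  qed
  have sum: "K * y * u - \<delta> * v * u \<le> (v / t) * b * (1 - exp b + exp b * E)"
    using A B by (simp add: algebra_simps)
  show ?thesis
  proof (cases "b \<ge> 1")
    case True
    have "exp b \<ge> 2" using exp_ge_add_one_self[of b] True by linarith
    moreover have "exp b * E \<le> exp b * (1/2)" using half by (intro mult_left_mono) (auto simp: E_def)
    ultimately have "1 - exp b + exp b * E \<le> 0" by linarith
    then have "(v / t) * b * (1 - exp b + exp b * E) \<le> 0"
      using v tp b by (intro mult_nonneg_nonpos) auto
    moreover have "0 \<le> v * (exp (1 + \<mu>) * exp (- \<mu> * a) * exp (- (1 + \<mu>) * ln t))" using v by simp
    ultimately show ?thesis using sum by linarith
  next
    case False
    have eb1: "exp b \<le> exp 1" using False by simp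
    have "E = exp (- \<mu> * a) * exp (- \<mu> * ln t) * exp (\<mu> * b)"
      unfolding E_def m b_def by (simp add: exp_add[symmetric] algebra_simps)
    also have "\<dots> \<le> exp (- \<mu> * a) * exp (- \<mu> * ln t) * exp \<mu>"
      using False \<mu> by (intro mult_left_mono) (auto simp: mult_le_cancel_left1)
    finally have E1: "E \<le> exp (- \<mu> * a) * exp (- \<mu> * ln t) * exp \<mu>" .
    have "1 - exp b + exp b * E \<le> exp b * E" using b by simp
    also have "\<dots> \<le> exp 1 * (exp (- \<mu> * a) * exp (- \<mu> * ln t) * exp \<mu>)"
      using eb1 E1 by (intro mult_mono) (auto simp: E_def)
    finally have br: "1 - exp b + exp b * E \<le> exp 1 * (exp (- \<mu> * a) * exp (- \<mu> * ln t) * exp \<mu>)" .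
    have br0: "0 \<le> 1 - exp b + exp b * E \<or> 1 - exp b + exp b * E < 0" by auto
    have "(v / t) * b * (1 - exp b + exp b * E) \<le> (v / t) * 1 * (exp 1 * (exp (- \<mu> * a) * exp (- \<mu> * ln t) * exp \<mu>))"
    proof (cases "0 \<le> 1 - exp b + exp b * E")
      case True
      show ?thesis using v tp b False br True by (intro mult_mono) auto
    next
      case c: False
      then have "(v / t) * b * (1 - exp b + exp b * E) \<le> 0" using v tp b by (intro mult_nonneg_nonpos) auto
      moreover have "0 \<le> (v / t) * 1 * (exp 1 * (exp (- \<mu> * a) * exp (- \<mu> * ln t) * exp \<mu>))" using v tp by simp
      ultimately show ?thesis by linarith
    qed
    also have "\<dots> = v * (exp (1 + \<mu>) * exp (- \<mu> * a) * exp (- (1 + \<mu>) * ln t))"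
      unfolding exp_shift[OF tp] by (simp add: exp_add)
    finally show ?thesis using sum by linarith
  qed
qed


lemma gen_id:
  fixes R0 R1 D0 D1 Gv wh :: "'a::real_inner"
  assumes "R1 - R0 = D1 - \<delta> *\<^sub>R wh" "D1 + b *\<^sub>R (D1 - D0) = Gv"
  shows "(1/2) * norm R1 ^ 2 + b * (R1 \<bullet> D1) - b * (S + (R1 - R0) \<bullet> D1)
       - ((1/2) * norm R0 ^ 2 + b * (R0 \<bullet> D0) - b * S)
       = (Gv - \<delta> *\<^sub>R wh) \<bullet> R0 + (1/2) * norm (R1 - R0) ^ 2"
proof -
  have e: "Gv - \<delta> *\<^sub>R wh = (R1 - R0) + b *\<^sub>R (D1 - D0)"
  proof -
    have "Gv - \<delta> *\<^sub>R wh = (D1 - \<delta> *\<^sub>R wh) + b *\<^sub>R (D1 - D0)" using assms(2) by (simp add: algebra_simps)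
    then show ?thesis by (simp only: assms(1)[symmetric])
  qed
  show ?thesis unfolding e power2_norm_eq_inner
    by (simp add: inner_diff_left inner_diff_right inner_add_left inner_add_right inner_commute[of R0 R1]
        inner_commute[of D1 R0] inner_commute[of D0 R0] inner_commute[of D1 R1] algebra_simps)
qed


lemma summ_exp: assumes "p > 1" shows "summable (\<lambda>k. exp (- p * ln (real (Suc k))))"
proof -
  have "summable (\<lambda>n. real n powr (- p))" using assms by (simp add: summable_real_powr_iff)
  then have "summable (\<lambda>k. real (Suc k) powr (- p))" by (subst summable_Suc_iff)
  moreover have "real (Suc k) powr (- p) = exp (- p * ln (real (Suc k)))" for k
    by (simp add: powr_def)
  ultimately show ?thesis by simp
qed

lemma inv_sq_exp: "t > 0 \<Longrightarrow> 1 / t^2 = exp (- 2 * ln (t::real))"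
proof -
  assume t: "t > 0"
  have "exp (- 2 * ln t) = inverse (exp (ln t) ^ 2)" by (simp add: exp_minus exp_of_nat_mult[symmetric] mult.commute)
  then show ?thesis using t by (simp add: field_simps)
qed


lemma partial_sum_bound:
  fixes f b :: "nat \<Rightarrow> real"
  assumes "summable b" "\<And>k. b k \<ge> 0" "eventually (\<lambda>k. f k \<le> b k) sequentially"
  shows "\<exists>C. \<forall>n. (\<Sum>k<n. f k) \<le> C"
proof -
  obtain N0 where N0: "\<And>k. k \<ge> N0 \<Longrightarrow> f k \<le> b k" using assms(3) unfolding eventually_sequentially by blast
  define c where "c k = (if k < N0 then \<bar>f k\<bar> else 0)" for k
  have sc: "summable c" by (rule summable_finite[of "{..<N0}"]) (auto simp: c_def)
  define h where "h k = c k + b k" for k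
  have sh: "summable h" unfolding h_def using sc assms(1) by (rule summable_add)
  have h0: "h k \<ge> 0" for k using assms(2)[of k] by (simp add: h_def c_def)
  have fh: "f k \<le> h k" for k
  proof (cases "k < N0")
    case True then show ?thesis using assms(2)[of k] by (simp add: h_def c_def)
  next
    case False then show ?thesis using N0[of k] by (simp add: h_def c_def)
  qed
  show ?thesis
  proof (intro exI allI)
    fix n
    have "(\<Sum>k<n. f k) \<le> (\<Sum>k<n. h k)" by (intro sum_mono fh)
    also have "\<dots> \<le> suminf h" using sh h0 by (intro sum_le_suminf) auto
    finally show "(\<Sum>k<n. f k) \<le> suminf h" .
  qed
qed

lemma quad:
  fixes x A B :: real
  assumes "x \<ge> 0" "x^2 \<le> A + B * x" "A \<ge> 0" "B \<ge> 0"
  shows "x \<le> max 1 (A + B)"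
proof (cases "x \<le> 1")
  case False
  then have "A \<le> A * x" using assms by (simp add: mult_le_cancel_left1)
  then have "x * x \<le> (A + B) * x" using assms by (simp add: power2_eq_square algebra_simps)
  then have "x \<le> A + B" using False by simp
  then show ?thesis by simp
qed simp




locale loss =
  fixes l l' :: "real \<Rightarrow> real"
  assumes A2_deriv: "\<And>x. (l has_real_derivative l' x) (at x)"
    and A2_neg: "\<And>x. l' x < 0"
    and A2_lim: "(l \<longlongrightarrow> 0) at_top" "(l' \<longlongrightarrow> 0) at_top"
    and A2_limsup: "Limsup at_bot (\<lambda>x. ereal (l' x)) < 0"
    and A3: "\<And>s0. \<exists>C. \<forall>x y. x \<ge> s0 \<longrightarrow> y \<ge> s0 \<longrightarrow> \<bar>l' x - l' y\<bar> \<le> C * \<bar>x - y\<bar>"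
begin

lemma l_decr: "x < y \<Longrightarrow> l y < l x"
  using DERIV_neg_imp_decreasing[of x y l] A2_deriv A2_neg by blast

lemma l_le_iff: "l x \<le> l y \<longleftrightarrow> y \<le> x"
proof
  assume "l x \<le> l y" then show "y \<le> x" using l_decr[of x y] by (cases "x < y") auto
next
  assume "y \<le> x" then show "l x \<le> l y" using l_decr[of y x] by (cases "y < x") auto
qed

lemma l_inj: "inj l"
  by (rule injI) (metis l_decr linorder_neqE_linordered_idom order_less_irrefl)

lemma l_pos: "l x > 0"
proof -
  have "0 \<le> l (x+1)"
  proof (rule tendsto_le[OF trivial_limit_at_top_linorder tendsto_const A2_lim(1)])
    show "\<forall>\<^sub>F y in at_top. l y \<le> l (x + 1)"
      unfolding eventually_at_top_linorder
      by (rule exI[of _ "x+1"]) (auto simp: l_le_iff)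
  qed
  then show ?thesis using l_decr[of x "x+1"] by simp
qed

lemma l_cont: "continuous_on S l"
  by (meson A2_deriv DERIV_isCont continuous_at_imp_continuous_on)

lemma lbot: "\<exists>c K. c < 0 \<and> (\<forall>x\<le>K. l' x < c)"
proof -
  obtain z where z: "Limsup at_bot (\<lambda>x. ereal (l' x)) < z" "z < 0"
    using A2_limsup dense by blast
  then obtain c where c: "z = ereal c"
    by (cases z) auto
  have "\<forall>\<^sub>F x in at_bot. ereal (l' x) < z"
    using Limsup_lessD[OF z(1)] .
  then obtain K where "\<forall>x\<le>K. ereal (l' x) < z"
    unfolding eventually_at_bot_linorder by blast
  then show ?thesis using z c by (intro exI[of _ c] exI[of _ K]) auto
qed

lemma l_surj: assumes "y > 0" shows "\<exists>x. l x = y"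
proof -
  obtain c K where cK: "c < 0" "\<forall>x\<le>K. l' x < c" using lbot by blast
  define a where "a = K - y / (-c)"
  have aK: "a \<le> K" using cK assms divide_pos_neg[of y c] by (simp add: a_def)
  have la: "l a \<ge> y"
  proof (cases "a = K")
    case True then have "y / (-c) = 0" by (simp add: a_def)
    then have "y = 0" using cK by simp
    then show ?thesis using assms by simp
  next
    case False
    then have "a < K" using aK by simp
    then obtain z where z: "a < z" "z < K" "l K - l a = (K - a) * l' z"
      using MVT2[of a K l l'] A2_deriv by blast
    have "l' z < c" using cK z(2) by auto
    then have "(K - a) * l' z \<le> (K - a) * c"
      using z by (intro mult_left_mono) auto
    also have "(K - a) * c = - y" using cK by (simp add: a_def field_simps)
    finally show ?thesis using z l_pos[of K] by linarith
  qed
  have "\<forall>\<^sub>F x in at_top. l x < y" using order_tendstoD(2)[OF A2_lim(1) assms] .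
  then obtain b0 where b0: "\<forall>x\<ge>b0. l x < y" unfolding eventually_at_top_linorder by blast
  define b where "b = max a b0"
  have lb: "l b \<le> y" using b0 by (simp add: b_def less_imp_le)
  have "a \<le> b" by (simp add: b_def)
  from IVT2'[OF lb la this l_cont] show ?thesis by blast
qed

lemma inv_l: "y > 0 \<Longrightarrow> l (inv l y) = y"
proof -
  assume "y > 0"
  then obtain x where "l x = y" using l_surj by blast
  then have "y \<in> range l" by auto
  then show ?thesis by (rule f_inv_into_f)
qed

lemma l'_cont: "continuous_on {a..b} l'"
proof -
  obtain C where C: "\<forall>x y. x \<ge> a \<longrightarrow> y \<ge> a \<longrightarrow> \<bar>l' x - l' y\<bar> \<le> C * \<bar>x - y\<bar>"
    using A3 by blast
  have "(max C 0)-lipschitz_on {a..b} l'"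
  proof (rule lipschitz_onI)
    fix x y assume "x \<in> {a..b}" "y \<in> {a..b}"
    then have "\<bar>l' x - l' y\<bar> \<le> C * \<bar>x - y\<bar>" using C by auto
    also have "\<dots> \<le> max C 0 * \<bar>x - y\<bar>" by (intro mult_right_mono) auto
    finally show "dist (l' x) (l' y) \<le> max C 0 * dist x y" by (simp add: dist_real_def)
  qed simp
  then show ?thesis by (rule lipschitz_on_continuous_on)
qed

lemma l'_bound: "\<exists>e>0. \<forall>x\<le>M. l' x \<le> - e"
proof -
  obtain c K where cK: "c < 0" "\<forall>x\<le>K. l' x < c" using lbot by blast
  show ?thesis
  proof (cases "K < M")
    case False
    then show ?thesis using cK by (intro exI[of _ "-c"]) (auto intro: less_imp_le)
  next
    case True
    obtain z where z: "z \<in> {K..M}" "\<forall>y\<in>{K..M}. l' y \<le> l' z"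
      using continuous_attains_sup[OF compact_Icc _ l'_cont, of K M] True by auto
    show ?thesis
    proof (intro exI[of _ "min (-c) (- l' z)"] conjI allI impI)
      show "0 < min (-c) (- l' z)" using cK A2_neg[of z] by simp
      fix x assume "x \<le> M"
      show "l' x \<le> - min (- c) (- l' z)"
      proof (cases "x \<le> K")
        case True then have "l' x < c" using cK by auto
        then show ?thesis by (auto simp: min_def)
      next
        case False then have "l' x \<le> l' z" using z \<open>x \<le> M\<close> by auto
        then show ?thesis by (auto simp: min_def)
      qed
    qed
  qed
qed

lemma l'_to_zero_imp:
  fixes a :: "nat \<Rightarrow> real"
  assumes "(\<lambda>t. l' (a t)) \<longlonglongrightarrow> 0"
  shows "filterlim a at_top sequentially"
proof (subst filterlim_at_top, intro allI)
  fix M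
  obtain e where e: "e > 0" "\<forall>x\<le>M. l' x \<le> - e" using l'_bound by blast
  have "\<forall>\<^sub>F t in sequentially. dist (l' (a t)) 0 < e" using assms e(1) tendstoD by blast
  then show "\<forall>\<^sub>F t in sequentially. M \<le> a t"
  proof (rule eventually_mono)
    fix t assume "dist (l' (a t)) 0 < e"
    then have "l' (a t) > -e" by (simp add: dist_real_def)
    show "M \<le> a t"
    proof (rule ccontr)
      assume "\<not> M \<le> a t"
      then have "l' (a t) \<le> -e" using e(2) by simp
      then show False using \<open>l' (a t) > -e\<close> by simp
    qed
  qed
qed

definition "LS s0 = {C. C \<ge> 0 \<and> (\<forall>x y. x \<ge> s0 \<longrightarrow> y \<ge> s0 \<longrightarrow> \<bar>l' x - l' y\<bar> \<le> C * \<bar>x - y\<bar>)}"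

lemma LS_ne: "LS s0 \<noteq> {}"
proof -
  obtain C where C: "\<forall>x y. x \<ge> s0 \<longrightarrow> y \<ge> s0 \<longrightarrow> \<bar>l' x - l' y\<bar> \<le> C * \<bar>x - y\<bar>"
    using A3 by blast
  have "max C 0 \<in> LS s0" unfolding LS_def
  proof (safe)
    fix x y assume "x \<ge> s0" "y \<ge> s0"
    then have "\<bar>l' x - l' y\<bar> \<le> C * \<bar>x - y\<bar>" using C by auto
    also have "\<dots> \<le> max C 0 * \<bar>x - y\<bar>" by (intro mult_right_mono) auto
    finally show "\<bar>l' x - l' y\<bar> \<le> max C 0 * \<bar>x - y\<bar>" .
  qed simp
  then show ?thesis by blast
qed

lemma lipH_nonneg: "lip_H l' s0 \<ge> 0"
  unfolding lip_H_def using LS_ne[of s0] by (intro cInf_greatest) (auto simp: LS_def)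

lemma lipH: assumes "x \<ge> s0" "y \<ge> s0" shows "\<bar>l' x - l' y\<bar> \<le> lip_H l' s0 * \<bar>x - y\<bar>"
proof (cases "x = y")
  case False
  then have p: "\<bar>x - y\<bar> > 0" by simp
  have "\<bar>l' x - l' y\<bar> / \<bar>x - y\<bar> \<le> lip_H l' s0"
    unfolding lip_H_def
  proof (rule cInf_greatest)
    show "{C. 0 \<le> C \<and> (\<forall>x y. s0 \<le> x \<longrightarrow> s0 \<le> y \<longrightarrow> \<bar>l' x - l' y\<bar> \<le> C * \<bar>x - y\<bar>)} \<noteq> {}"
      using LS_ne[of s0] by (simp add: LS_def)
    fix C assume "C \<in> {C. 0 \<le> C \<and> (\<forall>x y. s0 \<le> x \<longrightarrow> s0 \<le> y \<longrightarrow> \<bar>l' x - l' y\<bar> \<le> C * \<bar>x - y\<bar>)}"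
    then show "\<bar>l' x - l' y\<bar> / \<bar>x - y\<bar> \<le> C" using assms p by (simp add: divide_le_eq)
  qed
  then show ?thesis using p by (simp add: divide_le_eq mult.commute)
qed simp

lemma descent1:
  assumes "a \<ge> s0" "b \<ge> s0"
  shows "l b \<le> l a + l' a * (b - a) + lip_H l' s0 / 2 * (b - a)^2"
proof -
  define H where "H = lip_H l' s0"
  define \<phi> where "\<phi> z = l z - l a - l' a * (z - a) - H / 2 * (z - a)^2" for z
  have der: "DERIV \<phi> z :> l' z - l' a - H * (z - a)" for z
    unfolding \<phi>_def
    by (auto intro!: derivative_eq_intros A2_deriv simp: power2_eq_square algebra_simps)
  have "\<phi> b \<le> \<phi> a"
  proof (cases "a \<le> b")
    case True
    show ?thesis
    proof (rule DERIV_nonpos_imp_nonincreasing[OF True])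
      fix z assume z: "a \<le> z" "z \<le> b"
      have "l' z - l' a \<le> H * (z - a)"
        using lipH[where x=z and y=a] assms z by (simp add: H_def abs_le_iff)
      then show "\<exists>y. DERIV \<phi> z :> y \<and> y \<le> 0" using der[of z] by (intro exI[of _ "l' z - l' a - H * (z - a)"]) auto
    qed
  next
    case False
    show ?thesis
    proof (rule DERIV_nonneg_imp_nondecreasing[of b a \<phi>])
      show "b \<le> a" using False by simp
      fix z assume z: "b \<le> z" "z \<le> a"
      have "l' a - l' z \<le> H * (a - z)"
        using lipH[where x=z and y=a] assms z by (simp add: H_def abs_le_iff)
      then show "\<exists>y. DERIV \<phi> z :> y \<and> y \<ge> 0" using der[of z] by (intro exI[of _ "l' z - l' a - H * (z - a)"]) (auto simp: algebra_simps)
    qed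
  qed
  then show ?thesis by (simp add: \<phi>_def H_def)
qed

end

lemma sigma_bound:
  fixes X :: "'n::finite \<Rightarrow> real^'d"
  shows "(\<Sum>i\<in>UNIV. (X i \<bullet> d)^2) \<le> sigma_max X ^ 2 * norm d ^ 2"
proof -
  define f where "f = (\<lambda>c::real^'n. \<Sum>i\<in>UNIV. (c $ i) *\<^sub>R X i)"
  have lin: "linear f"
    unfolding f_def by (rule linearI) (auto simp: sum.distrib scaleR_add_left scaleR_right.sum scaleR_sum_right)
  then have bl: "bounded_linear f" using linear_conv_bounded_linear by blast
  define c where "c = (\<chi> i. X i \<bullet> d)"
  have nc: "norm c ^ 2 = (\<Sum>i\<in>UNIV. (X i \<bullet> d)^2)"
    unfolding power2_norm_eq_inner inner_vec_def[of c c] by (simp add: c_def power2_eq_square)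
  have fc: "f c \<bullet> d = norm c ^ 2"
    unfolding nc by (simp add: f_def c_def inner_sum_left power2_eq_square)
  have s0: "sigma_max X \<ge> 0" unfolding sigma_max_def using onorm_pos_le[OF bl] f_def by simp
  have "norm c ^ 2 \<le> norm (f c) * norm d" using fc Cauchy_Schwarz_ineq2[of "f c" d] by (metis abs_ge_self order_trans)
  also have "\<dots> \<le> sigma_max X * norm c * norm d"
    using onorm[OF bl, of c] unfolding sigma_max_def f_def[symmetric] by (intro mult_right_mono) auto
  finally have *: "norm c ^ 2 \<le> sigma_max X * norm c * norm d" .
  have "norm c \<le> sigma_max X * norm d"
  proof (cases "norm c = 0")
    case True then show ?thesis using s0 by simp
  next
    case False
    then have "norm c > 0" by simp
    then show ?thesis using * by (simp add: power2_eq_square mult.assoc)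
  qed
  then have "norm c ^ 2 \<le> (sigma_max X * norm d)^2" by (intro power_mono) auto
  then show ?thesis using nc by (simp add: power_mult_distrib)
qed

locale setting = loss l l'
  for l l' :: "real \<Rightarrow> real" +
  fixes X :: "'n::finite \<Rightarrow> real^'d"
    and \<beta> \<eta> :: real
    and w0 wt :: "real^'d"
    and v :: "'n \<Rightarrow> real"
  assumes A1: "\<exists>w. \<forall>i. w \<bullet> X i > 0"
    and A2_upper: "\<exists>\<mu>p xp. \<mu>p > 0 \<and> xp > 0 \<and>
                     (\<forall>x>xp. - l' x \<le> (1 + exp (- \<mu>p * x)) * exp (- x))"
    and A2_lower: "\<exists>\<mu>m xm. \<mu>m > 0 \<and> xm > 0 \<and>
                     (\<forall>x>xm. - l' x \<ge> (1 - exp (- \<mu>m * x)) * exp (- x))"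
    and beta: "0 \<le> \<beta>" "\<beta> < 1"
    and eta_pos: "0 < \<eta>"
    and eta_bound: "\<eta> < 2 * real CARD('n) /
          (sigma_max X ^ 2 * lip_H l' (inv l (real CARD('n) * emp_loss l X (gdm_w l' X \<beta> \<eta> w0 1))))"
    and generic_v: "max_margin X = (\<Sum>i\<in>UNIV. v i *\<^sub>R X i)"
                   "\<And>i. i \<in> support_set X \<Longrightarrow> v i > 0"
                   "\<And>i. i \<notin> support_set X \<Longrightarrow> v i = 0"
    and wt: "\<And>i. i \<in> support_set X \<Longrightarrow> (\<eta> / real CARD('n)) * exp (- (X i \<bullet> wt)) = v i"
begin

abbreviation "Lf \<equiv> emp_loss l X"
abbreviation "G \<equiv> emp_grad l' X"
abbreviation "W \<equiv> gdm_w l' X \<beta> \<eta> w0"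
definition "M t = snd (gdm_state l' X \<beta> \<eta> w0 t)"
definition "D t = W (Suc t) - W t"
abbreviation "\<alpha> \<equiv> \<eta> * (1 - \<beta>)"
definition "s0 = inv l (real CARD('n) * Lf w0)"
definition "H = lip_H l' s0"
abbreviation "\<sigma> \<equiv> sigma_max X"

lemma N_pos: "real CARD('n) > 0" by simp

lemma state_Suc: "gdm_state l' X \<beta> \<eta> w0 (Suc t) = (W t - \<eta> *\<^sub>R M t, \<beta> *\<^sub>R M t + (1 - \<beta>) *\<^sub>R G (W t - \<eta> *\<^sub>R M t))"
  by (simp add: gdm_w_def M_def split_beta Let_def)

lemma W0: "W 0 = w0" by (simp add: gdm_w_def)
lemma M0: "M 0 = 0" by (simp add: M_def)
lemma W_Suc: "W (Suc t) = W t - \<eta> *\<^sub>R M t" using state_Suc[of t] by (simp add: gdm_w_def)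
lemma M_Suc: "M (Suc t) = \<beta> *\<^sub>R M t + (1 - \<beta>) *\<^sub>R G (W (Suc t))"
  using state_Suc[of t] by (simp add: M_def W_Suc)
lemma W1: "W 1 = w0" using W_Suc[of 0] by (simp add: W0 M0)
lemma D_M: "D t = - \<eta> *\<^sub>R M t" by (simp add: D_def W_Suc)
lemma D0: "D 0 = 0" by (simp add: D_M M0)
lemma D_Suc: "D (Suc t) = \<beta> *\<^sub>R D t - \<alpha> *\<^sub>R G (W (Suc t))"
  by (simp add: D_M M_Suc algebra_simps)

lemma Lf_sum: "real CARD('n) * Lf w = (\<Sum>i\<in>UNIV. l (w \<bullet> X i))"
  by (simp add: emp_loss_def)

lemma Lf_pos: "Lf w > 0"
  unfolding emp_loss_def using l_pos by (intro mult_pos_pos sum_pos) auto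

lemma G_inner: "G w \<bullet> u = (1 / real CARD('n)) * (\<Sum>i\<in>UNIV. l' (w \<bullet> X i) * (X i \<bullet> u))"
  by (simp add: emp_grad_def inner_sum_left)

lemma ls0: "l s0 = real CARD('n) * Lf w0"
  unfolding s0_def using Lf_pos[of w0] by (intro inv_l) simp

lemma region: assumes "Lf w \<le> Lf w0" shows "w \<bullet> X i \<ge> s0"
proof -
  have "l (w \<bullet> X i) \<le> (\<Sum>j\<in>UNIV. l (w \<bullet> X j))"
    using l_pos by (intro member_le_sum) (auto intro: less_imp_le)
  also have "\<dots> = real CARD('n) * Lf w" by (simp add: Lf_sum)
  also have "\<dots> \<le> real CARD('n) * Lf w0" using assms by simp
  also have "\<dots> = l s0" by (simp add: ls0)
  finally show ?thesis by (simp add: l_le_iff)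
qed

lemma descent:
  assumes "\<And>i. w \<bullet> X i \<ge> s0" "\<And>i. (w + d) \<bullet> X i \<ge> s0"
  shows "Lf (w + d) \<le> Lf w + G w \<bullet> d + \<sigma>^2 * H / (2 * real CARD('n)) * norm d ^ 2"
proof -
  have "real CARD('n) * Lf (w + d) = (\<Sum>i\<in>UNIV. l ((w + d) \<bullet> X i))" by (simp add: Lf_sum)
  also have "\<dots> \<le> (\<Sum>i\<in>UNIV. l (w \<bullet> X i) + l' (w \<bullet> X i) * (X i \<bullet> d) + H / 2 * (X i \<bullet> d)^2)"
  proof (rule sum_mono)
    fix i
    show "l ((w + d) \<bullet> X i) \<le> l (w \<bullet> X i) + l' (w \<bullet> X i) * (X i \<bullet> d) + H / 2 * (X i \<bullet> d)^2"
    proof -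
      have e: "(w + d) \<bullet> X i - w \<bullet> X i = X i \<bullet> d" by (simp add: inner_add_left inner_commute[of d "X i"])
      show ?thesis using descent1[OF assms(1)[of i] assms(2)[of i]] unfolding e H_def by simp
    qed
  qed
  also have "\<dots> = real CARD('n) * Lf w + real CARD('n) * (G w \<bullet> d) + H / 2 * (\<Sum>i\<in>UNIV. (X i \<bullet> d)^2)"
    by (simp add: sum.distrib Lf_sum G_inner sum_distrib_left)
  also have "\<dots> \<le> real CARD('n) * Lf w + real CARD('n) * (G w \<bullet> d) + H / 2 * (\<sigma>^2 * norm d ^ 2)"
    using sigma_bound[of X d] lipH_nonneg[of s0] unfolding H_def by (intro add_left_mono mult_left_mono) auto
  finally have "real CARD('n) * Lf (w + d) \<le> real CARD('n) * (Lf w + G w \<bullet> d + \<sigma>^2 * H / (2 * real CARD('n)) * norm d ^ 2)"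
    by (simp add: algebra_simps)
  then show ?thesis using N_pos by (simp add: mult_le_cancel_left_pos)
qed


definition "cc = \<beta> / (2 * \<alpha>)"
definition "Ls = \<sigma>^2 * H / real CARD('n)"
definition "\<kappa> = 1 / \<eta> - Ls / 2"
definition "E t = Lf (W (Suc t)) + cc * norm (D t) ^ 2"

lemma alpha_pos: "\<alpha> > 0" using beta eta_pos by simp

lemma cc_nonneg: "cc \<ge> 0" using alpha_pos beta by (simp add: cc_def)

lemma Ls_facts: "Ls > 0" "\<kappa> > 0"
proof -
  have eb: "\<eta> < 2 * real CARD('n) / (\<sigma>^2 * H)"
    using eta_bound unfolding W1 by (simp add: s0_def H_def)
  have h1: "\<sigma>^2 * H \<ge> 0" using lipH_nonneg[of s0] by (simp add: H_def)
  have h2: "\<sigma>^2 * H \<noteq> 0" using eb eta_pos by auto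
  have p: "\<sigma>^2 * H > 0" using h1 h2 by (metis order_le_neq_trans)
  then show "Ls > 0" by (simp add: Ls_def)
  from eb p have "\<eta> * (\<sigma>^2 * H) < 2 * real CARD('n)" by (simp add: pos_less_divide_eq)
  then have "\<eta> * Ls < 2" by (simp add: Ls_def pos_divide_less_eq mult.assoc[symmetric])
  then show "\<kappa> > 0" using eta_pos by (simp add: \<kappa>_def field_simps)
qed

lemma aux2: "2 * (a - b) \<le> 0 \<Longrightarrow> a \<le> (b::real)" by simp

lemma claim:
  assumes r1: "\<And>i. p \<bullet> X i \<ge> s0" and r2: "\<And>i. (p + s *\<^sub>R q) \<bullet> X i \<ge> s0"
    and s: "0 \<le> s" "s \<le> 1" and q: "q = \<beta> *\<^sub>R D' - \<alpha> *\<^sub>R G p"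
  shows "Lf (p + s *\<^sub>R q) + cc * s * norm q ^ 2 \<le> Lf p + cc * norm D' ^ 2 - s * \<kappa> * norm q ^ 2"
proof -
  define P where "P = norm D' ^ 2"
  define Q where "Q = norm q ^ 2"
  define I where "I = D' \<bullet> q"
  have Gp: "G p = (1 / \<alpha>) *\<^sub>R (\<beta> *\<^sub>R D' - q)"
  proof -
    have h: "\<alpha> *\<^sub>R G p = \<beta> *\<^sub>R D' - q" using q by simp
    have "G p = (1 / \<alpha>) *\<^sub>R (\<alpha> *\<^sub>R G p)" using eta_pos beta by simp
    also have "\<dots> = (1 / \<alpha>) *\<^sub>R (\<beta> *\<^sub>R D' - q)" by (simp only: h)
    finally show ?thesis .
  qed
  have d: "Lf (p + s *\<^sub>R q) \<le> Lf p + G p \<bullet> (s *\<^sub>R q) + Ls / 2 * (s^2 * Q)"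
    using descent[OF r1 r2] by (simp add: Ls_def Q_def power_mult_distrib)
  have Gq: "G p \<bullet> (s *\<^sub>R q) = s / \<alpha> * (\<beta> * I - Q)"
    unfolding Gp by (simp add: I_def Q_def inner_diff_left power2_norm_eq_inner algebra_simps)
  have sq: "0 \<le> P - 2 * s * I + s^2 * Q"
  proof -
    have "0 \<le> norm (D' - s *\<^sub>R q) ^ 2" by simp
    also have "\<dots> = P - 2 * s * I + s^2 * Q"
      unfolding P_def Q_def I_def power2_norm_eq_inner
      by (simp add: inner_diff_left inner_diff_right inner_commute[of q D'] algebra_simps power2_eq_square)
    finally show ?thesis .
  qed
  have s2: "s^2 \<le> s" using s by (simp add: power2_eq_square mult_left_le)
  have Q0: "Q \<ge> 0" by (simp add: Q_def)
  have k1: "\<beta> * (2 * s * I - P - s * Q) \<le> 0"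
  proof -
    have "2 * s * I - P - s * Q \<le> 2 * s * I - P - s^2 * Q" using s2 Q0 by (simp add: mult_right_mono)
    then have "2 * s * I - P - s * Q \<le> 0" using sq by linarith
    then show ?thesis using beta by (simp add: mult_nonneg_nonpos)
  qed
  have k2: "\<alpha> * Ls * Q * (s^2 - s) \<le> 0"
    using alpha_pos Ls_facts Q0 s2 by (intro mult_nonneg_nonpos) auto
  have main: "\<alpha> * (s / \<alpha> * (\<beta> * I - Q) + Ls / 2 * (s^2 * Q) + cc * s * Q)
      \<le> \<alpha> * (cc * P - s * \<kappa> * Q)"
  proof -
    have l: "\<alpha> * (s / \<alpha> * (\<beta> * I - Q) + Ls / 2 * (s^2 * Q) + cc * s * Q)
       = s * (\<beta> * I - Q) + \<alpha> * Ls / 2 * s^2 * Q + \<beta> / 2 * s * Q"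
    proof -
      have gen: "a * (s / a * x + L / 2 * (s^2 * Q) + \<beta> / (2 * a) * s * Q)
          = s * x + a * L / 2 * s^2 * Q + \<beta> / 2 * s * Q" if "a > 0" for a x L :: real
        using that by (simp add: field_simps)
      show ?thesis unfolding cc_def by (rule gen[OF alpha_pos])
    qed
    have r: "\<alpha> * (cc * P - s * \<kappa> * Q) = \<beta> / 2 * P - s * (1 - \<beta>) * Q + s * \<alpha> * Ls / 2 * Q"
      using alpha_pos eta_pos beta by (simp add: cc_def \<kappa>_def field_simps)
    have e: "2 * ((s * (\<beta> * I - Q) + \<alpha> * Ls / 2 * s^2 * Q + \<beta> / 2 * s * Q)
       - (\<beta> / 2 * P - s * (1 - \<beta>) * Q + s * \<alpha> * Ls / 2 * Q))
       = \<beta> * (2 * s * I - P - s * Q) + \<alpha> * Ls * Q * (s^2 - s)"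
      by (simp add: field_simps power2_eq_square)
    have "2 * ((s * (\<beta> * I - Q) + \<alpha> * Ls / 2 * s^2 * Q + \<beta> / 2 * s * Q)
       - (\<beta> / 2 * P - s * (1 - \<beta>) * Q + s * \<alpha> * Ls / 2 * Q)) \<le> 0"
      unfolding e using add_nonpos_nonpos[OF k1 k2] .
    then show ?thesis unfolding l r by (rule aux2)
  qed
  then have "s / \<alpha> * (\<beta> * I - Q) + Ls / 2 * (s^2 * Q) + cc * s * Q \<le> cc * P - s * \<kappa> * Q"
    using alpha_pos by (simp add: mult_le_cancel_left_pos)
  then show ?thesis using d Gq by (simp add: P_def Q_def)
qed


lemma step_region:
  assumes r1: "\<And>i. p \<bullet> X i \<ge> s0" and Eb: "Lf p + cc * norm D' ^ 2 \<le> Lf w0"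
    and q: "q = \<beta> *\<^sub>R D' - \<alpha> *\<^sub>R G p"
  shows "(p + q) \<bullet> X i \<ge> s0"
proof (rule ccontr)
  assume nt: "\<not> (p + q) \<bullet> X i \<ge> s0"
  define J where "J = {i. (p + q) \<bullet> X i < s0}"
  have Jne: "J \<noteq> {}" using nt by (auto simp: J_def not_le)
  have Jf: "finite J" by simp
  have neg: "q \<bullet> X j < 0" if "j \<in> J" for j
    using that r1[of j] by (simp add: J_def inner_add_left)
  define sf where "sf j = (s0 - p \<bullet> X j) / (q \<bullet> X j)" for j
  have sf0: "0 \<le> sf j" if "j \<in> J" for j
    using neg[OF that] r1[of j] unfolding sf_def by (intro divide_nonpos_neg) auto
  have sf1: "sf j < 1" if "j \<in> J" for j
  proof -
    have "s0 - p \<bullet> X j > q \<bullet> X j" using that by (simp add: J_def inner_add_left)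
    then show ?thesis using neg[OF that] unfolding sf_def by (simp add: divide_less_eq)
  qed
  have "Min (sf ` J) \<in> sf ` J" using Jne Jf by (intro Min_in) auto
  then obtain i0 where i0: "i0 \<in> J" "sf i0 = Min (sf ` J)" by (metis imageE)
  have smin: "sf i0 \<le> sf j" if "j \<in> J" for j using i0 that Jf by simp
  define s where "s = sf i0"
  have s01: "0 \<le> s" "s \<le> 1" using sf0[OF i0(1)] sf1[OF i0(1)] by (auto simp: s_def)
  have m0: "(p + s *\<^sub>R q) \<bullet> X i0 = s0"
    using neg[OF i0(1)] by (simp add: s_def sf_def inner_add_left)
  have reg: "(p + s *\<^sub>R q) \<bullet> X j \<ge> s0" for j
  proof (cases "j \<in> J")
    case True
    have "sf j * (q \<bullet> X j) \<le> s * (q \<bullet> X j)"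
      using smin[OF True] neg[OF True] by (simp add: s_def mult_right_mono_neg)
    moreover have "sf j * (q \<bullet> X j) = s0 - p \<bullet> X j" using neg[OF True] by (simp add: sf_def)
    ultimately show ?thesis by (simp add: inner_add_left)
  next
    case False
    then have a: "(p + q) \<bullet> X j \<ge> s0" by (simp add: J_def)
    have "(p + s *\<^sub>R q) \<bullet> X j = (1 - s) * (p \<bullet> X j) + s * ((p + q) \<bullet> X j)"
      by (simp add: inner_add_left algebra_simps)
    also have "\<dots> \<ge> (1 - s) * s0 + s * s0"
      using s01 a r1[of j] by (intro add_mono mult_left_mono) auto
    finally show ?thesis by (simp add: algebra_simps)
  qed
  have cl: "Lf (p + s *\<^sub>R q) + cc * s * norm q ^ 2 \<le> Lf p + cc * norm D' ^ 2 - s * \<kappa> * norm q ^ 2"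
    by (rule claim[OF r1 reg s01 q])
  define rest where "rest = (\<Sum>j\<in>UNIV - {i0}. l ((p + s *\<^sub>R q) \<bullet> X j))"
  have "real CARD('n) * Lf (p + s *\<^sub>R q) = l s0 + rest"
    unfolding Lf_sum rest_def using sum.remove[of UNIV i0 "\<lambda>j. l ((p + s *\<^sub>R q) \<bullet> X j)"] m0 by simp
  then have eq: "real CARD('n) * Lf (p + s *\<^sub>R q) = real CARD('n) * Lf w0 + rest" by (simp add: ls0)
  have rest0: "rest \<ge> 0" unfolding rest_def using l_pos by (intro sum_nonneg) (auto intro: less_imp_le)
  have ccs: "cc * s * norm q ^ 2 \<ge> 0" using cc_nonneg s01 by simp
  have sk: "s * \<kappa> * norm q ^ 2 \<ge> 0" using Ls_facts s01 by simp
  have "Lf (p + s *\<^sub>R q) \<le> Lf w0 - s * \<kappa> * norm q ^ 2" using cl Eb ccs by linarith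
  then have "real CARD('n) * Lf (p + s *\<^sub>R q) \<le> real CARD('n) * (Lf w0 - s * \<kappa> * norm q ^ 2)"
    by (simp add: mult_le_cancel_left_pos)
  then have "rest + real CARD('n) * (s * \<kappa> * norm q ^ 2) \<le> 0" using eq by (simp add: algebra_simps)
  moreover have "real CARD('n) * (s * \<kappa> * norm q ^ 2) \<ge> 0" using sk by simp
  ultimately have r0: "rest = 0" and sk0: "real CARD('n) * (s * \<kappa> * norm q ^ 2) = 0"
    using rest0 by linarith+
  show False
  proof (cases "UNIV - {i0} = {}")
    case False
    then have "rest > 0" unfolding rest_def using l_pos by (intro sum_pos) auto
    then show False using r0 by simp
  next
    case True
    then have U: "UNIV = {i0}" by auto
    have "q \<noteq> 0" using neg[OF i0(1)] by auto
    then have "s = 0" using sk0 Ls_facts by simp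
    then have pi0: "p \<bullet> X i0 = s0" using m0 by simp
    have "real CARD('n) * Lf p = l (p \<bullet> X i0)" unfolding Lf_sum by (subst U) simp
    also have "\<dots> = real CARD('n) * Lf w0" using pi0 ls0 by simp
    finally have "Lf p = Lf w0" by simp
    then have "cc * norm D' ^ 2 \<le> 0" using Eb by simp
    moreover have "cc * norm D' ^ 2 \<ge> 0" using cc_nonneg by simp
    ultimately have "cc * norm D' ^ 2 = 0" by linarith
    then have "\<beta> *\<^sub>R D' = 0" using alpha_pos by (auto simp: cc_def)
    then have qq: "q = - \<alpha> *\<^sub>R G p" using q by simp
    have "G p \<bullet> X i0 = (1 / real CARD('n)) * (l' (p \<bullet> X i0) * (X i0 \<bullet> X i0))"
      unfolding G_inner by (subst U) simp
    also have "\<dots> \<le> 0"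
    proof -
      have "l' (p \<bullet> X i0) * (X i0 \<bullet> X i0) \<le> 0"
        using A2_neg[of "p \<bullet> X i0"] by (intro mult_nonpos_nonneg) auto
      then show ?thesis by (simp add: divide_nonpos_pos)
    qed
    finally have gx: "G p \<bullet> X i0 \<le> 0" .
    have "q \<bullet> X i0 \<ge> 0" unfolding qq using mult_nonneg_nonpos[of \<alpha> "G p \<bullet> X i0"] alpha_pos gx
      by simp
    then show False using neg[OF i0(1)] by simp
  qed
qed


lemma E_step:
  assumes "E t \<le> Lf w0"
  shows "E (Suc t) \<le> E t - \<kappa> * norm (D (Suc t)) ^ 2"
proof -
  define p where "p = W (Suc t)"
  define q where "q = D (Suc t)"
  have q: "q = \<beta> *\<^sub>R D t - \<alpha> *\<^sub>R G p" by (simp add: q_def p_def D_Suc)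
  have Eb: "Lf p + cc * norm (D t) ^ 2 \<le> Lf w0" using assms by (simp add: E_def p_def)
  have "Lf p \<le> Lf w0" using Eb cc_nonneg by (smt (verit) mult_nonneg_nonneg zero_le_power2)
  then have r1: "\<And>i. p \<bullet> X i \<ge> s0" by (rule region)
  have r2: "\<And>i. (p + q) \<bullet> X i \<ge> s0" by (rule step_region[OF r1 Eb q])
  have "Lf (p + 1 *\<^sub>R q) + cc * 1 * norm q ^ 2 \<le> Lf p + cc * norm (D t) ^ 2 - 1 * \<kappa> * norm q ^ 2"
    by (rule claim[OF r1 _ _ _ q]) (use r2 in auto)
  moreover have "W (Suc (Suc t)) = p + q" by (simp add: p_def q_def D_def)
  ultimately show ?thesis by (simp add: E_def p_def q_def)
qed

lemma lyap: "E t + \<kappa> * (\<Sum>k<t. norm (D (Suc k)) ^ 2) \<le> Lf w0"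
proof (induction t)
  case 0
  have "W (Suc 0) = w0" using W1 by simp
  then show ?case by (simp add: E_def D0)
next
  case (Suc t)
  have "\<kappa> * (\<Sum>k<t. norm (D (Suc k)) ^ 2) \<ge> 0" using Ls_facts by (intro mult_nonneg_nonneg sum_nonneg) auto
  then have "E t \<le> Lf w0" using Suc by linarith
  from E_step[OF this] Suc show ?case by (simp add: algebra_simps)
qed

lemma E_ge: "E t \<ge> 0"
  unfolding E_def using Lf_pos[of "W (Suc t)"] cc_nonneg by (smt (verit) mult_nonneg_nonneg zero_le_power2)

lemma Dsum: "(\<Sum>k<n. norm (D k) ^ 2) \<le> Lf w0 / \<kappa>"
proof (cases n)
  case 0 then show ?thesis using Ls_facts Lf_pos[of w0] by simp
next
  case (Suc m)
  have "(\<Sum>k<n. norm (D k) ^ 2) = (\<Sum>k<m. norm (D (Suc k)) ^ 2)"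
    unfolding Suc sum.lessThan_Suc_shift by (simp add: D0)
  also have "\<kappa> * \<dots> \<le> Lf w0" using lyap[of m] E_ge[of m] by linarith
  then have "(\<Sum>k<m. norm (D (Suc k)) ^ 2) \<le> Lf w0 / \<kappa>" using Ls_facts by (simp add: pos_le_divide_eq mult.commute)
  finally show ?thesis .
qed

lemma D_summable: "summable (\<lambda>k. norm (D k) ^ 2)"
  by (rule summableI_nonneg_bounded[OF _ Dsum]) simp

lemma D_lim: "D \<longlonglongrightarrow> 0"
proof -
  have "(\<lambda>k. norm (D k) ^ 2) \<longlonglongrightarrow> 0" by (rule summable_LIMSEQ_zero[OF D_summable])
  then have "(\<lambda>k. sqrt (norm (D k) ^ 2)) \<longlonglongrightarrow> sqrt 0" by (intro tendsto_real_sqrt)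
  then have "(\<lambda>k. norm (D k)) \<longlonglongrightarrow> 0" by simp
  then show ?thesis using tendsto_norm_zero_iff by blast
qed

lemma G_lim: "(\<lambda>t. G (W t)) \<longlonglongrightarrow> 0"
proof -
  have e: "G (W (Suc t)) = (1 / \<alpha>) *\<^sub>R (\<beta> *\<^sub>R D t - D (Suc t))" for t
  proof -
    have h: "\<alpha> *\<^sub>R G (W (Suc t)) = \<beta> *\<^sub>R D t - D (Suc t)" using D_Suc[of t] by simp
    have "G (W (Suc t)) = (1 / \<alpha>) *\<^sub>R (\<alpha> *\<^sub>R G (W (Suc t)))" using eta_pos beta by simp
    also have "\<dots> = (1 / \<alpha>) *\<^sub>R (\<beta> *\<^sub>R D t - D (Suc t))" by (simp only: h)
    finally show ?thesis .
  qed
  have "(\<lambda>t. (1 / \<alpha>) *\<^sub>R (\<beta> *\<^sub>R D t - D (Suc t))) \<longlonglongrightarrow> (1 / \<alpha>) *\<^sub>R (\<beta> *\<^sub>R 0 - 0)"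
    by (intro tendsto_intros D_lim LIMSEQ_Suc)
  then have "(\<lambda>t. G (W (Suc t))) \<longlonglongrightarrow> 0" unfolding e by simp
  then show ?thesis using filterlim_sequentially_Suc by blast
qed

lemma l'_G: assumes "\<forall>j. u \<bullet> X j > 0"
  shows "\<bar>l' (w \<bullet> X i)\<bar> \<le> real CARD('n) * norm (G w) * norm u / (X i \<bullet> u)"
proof -
  have gi: "X i \<bullet> u > 0" using assms by (simp add: inner_commute)
  have "- (l' (w \<bullet> X i) * (X i \<bullet> u)) \<le> - (\<Sum>j\<in>UNIV. l' (w \<bullet> X j) * (X j \<bullet> u))"
  proof -
    have "(\<Sum>j\<in>UNIV. l' (w \<bullet> X j) * (X j \<bullet> u)) \<le> l' (w \<bullet> X i) * (X i \<bullet> u)"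
    proof -
      have "(\<Sum>j\<in>UNIV. l' (w \<bullet> X j) * (X j \<bullet> u)) = l' (w \<bullet> X i) * (X i \<bullet> u) + (\<Sum>j\<in>UNIV-{i}. l' (w \<bullet> X j) * (X j \<bullet> u))"
        using sum.remove[of UNIV i "\<lambda>j. l' (w \<bullet> X j) * (X j \<bullet> u)"] by simp
      moreover have "(\<Sum>j\<in>UNIV-{i}. l' (w \<bullet> X j) * (X j \<bullet> u)) \<le> 0"
      proof (rule sum_nonpos)
        fix j
        have "X j \<bullet> u > 0" using assms by (simp add: inner_commute)
        then show "l' (w \<bullet> X j) * (X j \<bullet> u) \<le> 0" using A2_neg[of "w \<bullet> X j"] by (simp add: mult_nonpos_nonneg)
      qed
      ultimately show ?thesis by simp
    qed
    then show ?thesis by simp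
  qed
  also have "\<dots> = - (real CARD('n) * (G w \<bullet> u))" by (simp add: G_inner)
  also have "\<dots> \<le> real CARD('n) * norm (G w) * norm u"
  proof -
    have "-(G w \<bullet> u) \<le> norm (G w) * norm u" using Cauchy_Schwarz_ineq2[of "G w" u] by (simp add: abs_le_iff)
    then have "real CARD('n) * (-(G w \<bullet> u)) \<le> real CARD('n) * (norm (G w) * norm u)" by (rule mult_left_mono) simp
    then show ?thesis by (simp add: mult.assoc)
  qed
  finally have "\<bar>l' (w \<bullet> X i)\<bar> * (X i \<bullet> u) \<le> real CARD('n) * norm (G w) * norm u"
    using A2_neg[of "w \<bullet> X i"] by simp
  then show ?thesis using gi by (simp add: pos_le_divide_eq)
qed

lemma margin_lim: "filterlim (\<lambda>t. W t \<bullet> X i) at_top sequentially"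
proof (rule l'_to_zero_imp)
  obtain u where u: "\<forall>j. u \<bullet> X j > 0" using A1 by blast
  have "X i \<bullet> u \<noteq> 0" using u[rule_format, of i] by (simp add: inner_commute)
  then have "(\<lambda>t. real CARD('n) * norm (G (W t)) * norm u / (X i \<bullet> u)) \<longlonglongrightarrow> real CARD('n) * norm (0::real^'d) * norm u / (X i \<bullet> u)"
    by (intro tendsto_intros G_lim)
  then have z: "(\<lambda>t. real CARD('n) * norm (G (W t)) * norm u / (X i \<bullet> u)) \<longlonglongrightarrow> 0" by simp
  show "(\<lambda>t. l' (W t \<bullet> X i)) \<longlonglongrightarrow> 0"
    by (rule Lim_null_comparison[OF _ z]) (use l'_G[OF u] in auto)
qed


definition "feas w \<longleftrightarrow> (\<forall>i. w \<bullet> X i \<ge> 1)"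

lemma mm_exists: "\<exists>!w. feas w \<and> (\<forall>u. feas u \<longrightarrow> norm w ^ 2 \<le> norm u ^ 2)"
proof -
  define K where "K = {w. feas w}"
  have ci: "closed {w. 1 \<le> w \<bullet> X i}" for i using closed_halfspace_ge[where a="X i" and b=1] by (simp add: inner_commute)
  have cK: "closed K" unfolding K_def feas_def
    by (intro closed_Collect_all ci)
  obtain u where u: "\<forall>i. u \<bullet> X i > 0" using A1 by blast
  define \<gamma> where "\<gamma> = Min (range (\<lambda>i. u \<bullet> X i))"
  have gp: "\<gamma> > 0" unfolding \<gamma>_def using u by (subst Min_gr_iff) auto
  have gl: "\<gamma> \<le> u \<bullet> X i" for i unfolding \<gamma>_def by (rule Min_le) auto
  have "feas ((1/\<gamma>) *\<^sub>R u)" unfolding feas_def using gp gl by (auto simp: field_simps)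
  then have Kne: "K \<noteq> {}" by (auto simp: K_def)
  obtain w where w: "w \<in> K" "\<And>y. y \<in> K \<Longrightarrow> dist 0 w \<le> dist 0 y"
    using distance_attains_inf[OF cK Kne, of 0] by blast
  have wmin: "feas y \<Longrightarrow> norm w ^ 2 \<le> norm y ^ 2" for y
    using w(2)[of y] by (auto simp: K_def intro: power_mono)
  show ?thesis
  proof (rule ex1I[of _ w])
    show "feas w \<and> (\<forall>u. feas u \<longrightarrow> norm w ^ 2 \<le> norm u ^ 2)" using w(1) wmin by (auto simp: K_def)
    fix z assume z: "feas z \<and> (\<forall>u. feas u \<longrightarrow> norm z ^ 2 \<le> norm u ^ 2)"
    have eqn: "norm z ^ 2 = norm w ^ 2" using z wmin w(1) by (auto simp: K_def intro: order_antisym)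
    define mid where "mid = (1/2) *\<^sub>R (z + w)"
    have fm: "feas mid" unfolding feas_def mid_def
    proof
      fix i
      have "1 \<le> z \<bullet> X i" "1 \<le> w \<bullet> X i" using z w(1) by (auto simp: feas_def K_def)
      then show "1 \<le> ((1/2) *\<^sub>R (z + w)) \<bullet> X i" by (simp add: inner_add_left)
    qed
    have "norm mid ^ 2 = (norm z ^ 2 + norm w ^ 2) / 2 - norm (z - w) ^ 2 / 4"
      unfolding mid_def power2_norm_eq_inner
      by (simp add: inner_add_left inner_add_right inner_diff_left inner_diff_right inner_commute[of w z] field_simps)
    moreover have "norm z ^ 2 \<le> norm mid ^ 2" using z fm by blast
    ultimately have "norm (z - w) ^ 2 \<le> 0" using eqn by simp
    then show "z = w" by simp
  qed
qed

lemma mm_feas: "max_margin X \<bullet> X i \<ge> 1"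
proof -
  have "feas (max_margin X)"
    unfolding max_margin_def using theI'[OF mm_exists] by (simp add: feas_def)
  then show ?thesis by (simp add: feas_def)
qed

lemma nonsv_gt: "i \<notin> support_set X \<Longrightarrow> X i \<bullet> max_margin X > 1"
  using mm_feas[of i] by (simp add: support_set_def inner_commute)


abbreviation "r \<equiv> res_r l' X \<beta> \<eta> w0 wt"
abbreviation "g \<equiv> pot_g l' X \<beta> \<eta> w0 wt"
abbreviation "wh \<equiv> max_margin X"
definition "dl k = ln (real (Suc (Suc k))) - ln (real (Suc k))"

lemma r_def': "r t = W t - ln (real t) *\<^sub>R wh - wt" by (simp add: res_r_def)

lemma V: "D (Suc k) + (\<beta> / (1 - \<beta>)) *\<^sub>R (D (Suc k) - D k) = - \<eta> *\<^sub>R G (W (Suc k))"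
proof -
  define b where "b = \<beta> / (1 - \<beta>)"
  have "D (Suc k) + b *\<^sub>R (D (Suc k) - D k) = (\<beta> + b * (\<beta> - 1)) *\<^sub>R D k + (- (\<alpha> + b * \<alpha>)) *\<^sub>R G (W (Suc k))"
    by (simp add: D_Suc algebra_simps)
  also have "\<beta> + b * (\<beta> - 1) = 0" using beta by (simp add: b_def field_simps)
  also have "\<alpha> + b * \<alpha> = \<eta>" using beta by (simp add: b_def field_simps)
  finally show ?thesis by (simp add: b_def)
qed

lemma g_diff: "g (Suc (Suc k)) - g (Suc k) =
   (- \<eta> *\<^sub>R G (W (Suc k)) - dl k *\<^sub>R wh) \<bullet> r (Suc k) + (1/2) * norm (r (Suc (Suc k)) - r (Suc k)) ^ 2"
proof -
  define S where "S = (\<Sum>\<tau>=2..Suc k. (r \<tau> - r (\<tau> - 1)) \<bullet> (W \<tau> - W (\<tau> - 1)))"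
  have g1: "g (Suc (Suc k)) = (1/2) * norm (r (Suc (Suc k))) ^ 2 + (\<beta> / (1 - \<beta>)) * (r (Suc (Suc k)) \<bullet> D (Suc k))
     - (\<beta> / (1 - \<beta>)) * (S + (r (Suc (Suc k)) - r (Suc k)) \<bullet> D (Suc k))"
    by (simp add: pot_g_def Let_def S_def D_def)
  have g0: "g (Suc k) = (1/2) * norm (r (Suc k)) ^ 2 + (\<beta> / (1 - \<beta>)) * (r (Suc k) \<bullet> D k) - (\<beta> / (1 - \<beta>)) * S"
    by (simp add: pot_g_def Let_def S_def D_def)
  have rd: "r (Suc (Suc k)) - r (Suc k) = D (Suc k) - dl k *\<^sub>R wh"
    by (simp add: r_def' D_def dl_def algebra_simps)
  show ?thesis unfolding g1 g0 by (rule gen_id[OF rd V])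
qed


lemma T_sum: "(- \<eta> *\<^sub>R G (W t) - d *\<^sub>R wh) \<bullet> r t =
   (\<Sum>i\<in>UNIV. (\<eta> / real CARD('n)) * (- l' (W t \<bullet> X i)) * (X i \<bullet> r t) - d * v i * (X i \<bullet> r t))"
proof -
  have a: "G (W t) \<bullet> r t = (1 / real CARD('n)) * (\<Sum>i\<in>UNIV. l' (W t \<bullet> X i) * (X i \<bullet> r t))" by (rule G_inner)
  have b: "wh \<bullet> r t = (\<Sum>i\<in>UNIV. v i * (X i \<bullet> r t))" by (simp add: generic_v(1) inner_sum_left)
  show ?thesis unfolding inner_diff_left inner_scaleR_left a b
    by (simp add: sum_subtractf sum_distrib_left sum_negf algebra_simps)
qed

lemma margin_dec: "W t \<bullet> X i = ln (real t) * (X i \<bullet> wh) + X i \<bullet> wt + X i \<bullet> r t"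
proof -
  have "W t = r t + ln (real t) *\<^sub>R wh + wt" by (simp add: r_def')
  have "W t \<bullet> X i = X i \<bullet> W t" by (simp add: inner_commute)
  also have "\<dots> = X i \<bullet> (r t + ln (real t) *\<^sub>R wh + wt)" using \<open>W t = _\<close> by simp
  finally show ?thesis by (simp add: inner_add_right)
qed

definition "Bf \<mu>p \<mu>m i k = (let tr = real (Suc k); a = X i \<bullet> wt in
   if i \<in> support_set X then v i * (exp (- \<mu>p * a) * exp (- (1 + \<mu>p) * ln tr) + exp (- 2 * ln tr)
        + exp (1 + \<mu>m) * exp (- \<mu>m * a) * exp (- (1 + \<mu>m) * ln tr))
   else (\<eta> / real CARD('n)) * (2 * exp (- a) * exp (- (X i \<bullet> wh) * ln tr)))"

lemma Bf_nonneg: "Bf \<mu>p \<mu>m i k \<ge> 0"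
proof (cases "i \<in> support_set X")
  case True
  have "v i > 0" using generic_v(2)[OF True] .
  then show ?thesis using True unfolding Bf_def Let_def
    by (simp del: exp_le_one_iff)
next
  case False
  then show ?thesis using eta_pos unfolding Bf_def Let_def by simp
qed

lemma Bf_summable: assumes "\<mu>p > 0" "\<mu>m > 0" shows "summable (Bf \<mu>p \<mu>m i)"
proof (cases "i \<in> support_set X")
  case True
  have "summable (\<lambda>k. v i * (exp (- \<mu>p * (X i \<bullet> wt)) * exp (- (1 + \<mu>p) * ln (real (Suc k))) + exp (- 2 * ln (real (Suc k)))
        + exp (1 + \<mu>m) * exp (- \<mu>m * (X i \<bullet> wt)) * exp (- (1 + \<mu>m) * ln (real (Suc k)))))"
    using assms by (intro summable_mult summable_add summ_exp) auto
  moreover have "Bf \<mu>p \<mu>m i = (\<lambda>k. v i * (exp (- \<mu>p * (X i \<bullet> wt)) * exp (- (1 + \<mu>p) * ln (real (Suc k))) + exp (- 2 * ln (real (Suc k)))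
        + exp (1 + \<mu>m) * exp (- \<mu>m * (X i \<bullet> wt)) * exp (- (1 + \<mu>m) * ln (real (Suc k)))))"
    by (rule ext) (simp only: Bf_def Let_def True if_True)
  ultimately show ?thesis by simp
next
  case False
  have "summable (\<lambda>k. (\<eta> / real CARD('n)) * (2 * exp (- (X i \<bullet> wt)) * exp (- (X i \<bullet> wh) * ln (real (Suc k)))))"
    using nonsv_gt[OF False] by (intro summable_mult summ_exp) auto
  moreover have "Bf \<mu>p \<mu>m i = (\<lambda>k. (\<eta> / real CARD('n)) * (2 * exp (- (X i \<bullet> wt)) * exp (- (X i \<bullet> wh) * ln (real (Suc k)))))"
    by (rule ext) (simp only: Bf_def Let_def False if_False)
  ultimately show ?thesis by simp
qed


lemma term_bound:
  assumes \<mu>p: "\<mu>p > 0" and hp: "\<forall>x>xp. - l' x \<le> (1 + exp (- \<mu>p * x)) * exp (- x)"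
    and \<mu>m: "\<mu>m > 0" and hm: "\<forall>x>xm. - l' x \<ge> (1 - exp (- \<mu>m * x)) * exp (- x)"
    and mc: "W (Suc k) \<bullet> X i > max (max xp xm) (max 0 (ln 2 / \<mu>m))"
  shows "(\<eta> / real CARD('n)) * (- l' (W (Suc k) \<bullet> X i)) * (X i \<bullet> r (Suc k)) - dl k * v i * (X i \<bullet> r (Suc k))
         \<le> Bf \<mu>p \<mu>m i k"
proof -
  define t where "t = real (Suc k)"
  define m where "m = W (Suc k) \<bullet> X i"
  define u where "u = X i \<bullet> r (Suc k)"
  define a where "a = X i \<bullet> wt"
  define K where "K = \<eta> / real CARD('n)"
  define y where "y = - l' m"
  have t1: "t \<ge> 1" and tp: "t > 0" by (auto simp: t_def)
  have K: "K > 0" using eta_pos by (simp add: K_def)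
  have ypos: "y > 0" using A2_neg[of m] by (simp add: y_def)
  have mxp: "m > xp" and mxm: "m > xm" and m0: "m > 0" and mln: "m > ln 2 / \<mu>m" using mc by (auto simp: m_def)
  have dl: "dl k = ln (t + 1) - ln t" by (simp add: dl_def t_def add.commute)
  have dlb: "dl k \<le> 1 / t" "1 / (t + 1) \<le> dl k" using delta_bounds[OF t1] dl by auto
  have md: "m = ln t * (X i \<bullet> wh) + a + u" using margin_dec[of "Suc k" i] by (simp add: m_def t_def a_def u_def)
  have yup: "y \<le> (1 + exp (- \<mu>p * m)) * exp (- m)" using hp mxp by (simp add: y_def)
  have goal_eq: "(\<eta> / real CARD('n)) * (- l' (W (Suc k) \<bullet> X i)) * (X i \<bullet> r (Suc k)) - dl k * v i * (X i \<bullet> r (Suc k))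
     = K * y * u - dl k * v i * u" by (simp add: K_def y_def m_def u_def)
  show ?thesis
  proof (cases "i \<in> support_set X")
    case False
    have v0: "v i = 0" using generic_v(3)[OF False] .
    have "exp (- \<mu>p * m) \<le> 1" using \<mu>p m0 by simp
    then have "(1 + exp (- \<mu>p * m)) * exp (- m) \<le> 2 * exp (- m)" by (intro mult_right_mono) auto
    then have "y \<le> 2 * exp (- m)" using yup by linarith
    from bound_nonsv[OF ypos this md tp]
    have "y * u \<le> 2 * exp (- a) * exp (- (X i \<bullet> wh) * ln t)" .
    then have "K * (y * u) \<le> K * (2 * exp (- a) * exp (- (X i \<bullet> wh) * ln t))" using K by (intro mult_left_mono) auto
    then show ?thesis unfolding goal_eq using False v0 by (simp add: Bf_def Let_def K_def a_def t_def mult.assoc)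
  next
    case True
    have th: "X i \<bullet> wh = 1" using True by (simp add: support_set_def)
    have md1: "m = ln t + a + u" using md th by simp
    have Kv: "K * exp (- a) = v i" using wt[OF True] by (simp add: K_def a_def)
    have B_eq: "Bf \<mu>p \<mu>m i k = v i * (exp (- \<mu>p * a) * exp (- (1 + \<mu>p) * ln t) + 1 / t^2
        + exp (1 + \<mu>m) * exp (- \<mu>m * a) * exp (- (1 + \<mu>m) * ln t))"
      using True inv_sq_exp[OF tp] by (simp add: Bf_def Let_def a_def t_def)
    have vpos: "v i > 0" using generic_v(2)[OF True] .
    show ?thesis
    proof (cases "u \<ge> 0")
      case True
      from bound_sv_pos[OF yup True md1 t1 \<mu>p K Kv dlb(2)]
      have "K * y * u - dl k * v i * u \<le> v i * (exp (- \<mu>p * a) * exp (- (1 + \<mu>p) * ln t) + 1 / t^2)" .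
      moreover have "0 \<le> v i * (exp (1 + \<mu>m) * exp (- \<mu>m * a) * exp (- (1 + \<mu>m) * ln t))" using vpos by simp
      ultimately show ?thesis unfolding goal_eq B_eq by (simp add: algebra_simps)
    next
      case False
      have ylo: "(1 - exp (- \<mu>m * m)) * exp (- m) \<le> y" using hm mxm by (simp add: y_def)
      have "\<mu>m * m > ln 2" using mln \<mu>m by (simp add: divide_less_eq mult.commute)
      then have "exp (- \<mu>m * m) < exp (- ln 2)" by simp
      then have half: "exp (- \<mu>m * m) \<le> 1 / 2" by (simp add: exp_minus)
      have "0 \<le> 1 / (t + 1)" using tp by simp
      then have dl0: "0 \<le> dl k" using dlb(2) by linarith
      from bound_sv_neg[OF ylo _ md1 t1 \<mu>m K Kv dlb(1) dl0 half] False
      have "K * y * u - dl k * v i * u \<le> v i * (exp (1 + \<mu>m) * exp (- \<mu>m * a) * exp (- (1 + \<mu>m) * ln t))" by simp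
      moreover have "0 \<le> v i * (exp (- \<mu>p * a) * exp (- (1 + \<mu>p) * ln t) + 1 / t^2)" using vpos by simp
      ultimately show ?thesis unfolding goal_eq B_eq by (simp add: algebra_simps)
    qed
  qed
qed


definition "Tt k = (- \<eta> *\<^sub>R G (W (Suc k)) - dl k *\<^sub>R wh) \<bullet> r (Suc k)"

lemma T_eventually: "\<exists>\<mu>p \<mu>m. \<mu>p > 0 \<and> \<mu>m > 0 \<and> eventually (\<lambda>k. Tt k \<le> (\<Sum>i\<in>UNIV. Bf \<mu>p \<mu>m i k)) sequentially"
proof -
  obtain \<mu>p xp where hp: "\<mu>p > 0" "\<forall>x>xp. - l' x \<le> (1 + exp (- \<mu>p * x)) * exp (- x)" using A2_upper by blast
  obtain \<mu>m xm where hm: "\<mu>m > 0" "\<forall>x>xm. - l' x \<ge> (1 - exp (- \<mu>m * x)) * exp (- x)" using A2_lower by blast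
  define C where "C = max (max xp xm) (max 0 (ln 2 / \<mu>m))"
  have "eventually (\<lambda>k. C < W (Suc k) \<bullet> X i) sequentially" for i
  proof -
    have "eventually (\<lambda>t. C < W t \<bullet> X i) sequentially"
      using margin_lim[of i] unfolding filterlim_at_top_dense by blast
    then show ?thesis by (subst eventually_sequentially_Suc)
  qed
  then have "eventually (\<lambda>k. \<forall>i. C < W (Suc k) \<bullet> X i) sequentially" by (rule eventually_all_finite)
  then have "eventually (\<lambda>k. Tt k \<le> (\<Sum>i\<in>UNIV. Bf \<mu>p \<mu>m i k)) sequentially"
  proof (rule eventually_mono)
    fix k assume a: "\<forall>i. C < W (Suc k) \<bullet> X i"
    show "Tt k \<le> (\<Sum>i\<in>UNIV. Bf \<mu>p \<mu>m i k)"
      unfolding Tt_def T_sum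
      by (intro sum_mono term_bound[OF hp(1,2) hm(1,2)]) (use a in \<open>auto simp: C_def\<close>)
  qed
  then show ?thesis using hp hm by blast
qed

lemma rdiff: "r (Suc (Suc k)) - r (Suc k) = D (Suc k) - dl k *\<^sub>R wh"
  by (simp add: r_def' D_def dl_def algebra_simps)

lemma dl_bound: "dl k \<le> 1 / real (Suc k)" "dl k \<ge> 0"
proof -
  have t1: "real (Suc k) \<ge> 1" by simp
  have dl: "dl k = ln (real (Suc k) + 1) - ln (real (Suc k))" by (simp add: dl_def add.commute)
  show "dl k \<le> 1 / real (Suc k)" using delta_bounds(1)[OF t1] dl by simp
  have "0 \<le> 1 / (real (Suc k) + 1)" by simp
  then show "dl k \<ge> 0" using delta_bounds(2)[OF t1] dl by linarith
qed

lemma dl_sq: "(dl k)^2 \<le> exp (- 2 * ln (real (Suc k)))"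
proof -
  have "(dl k)^2 \<le> (1 / real (Suc k))^2" using dl_bound by (intro power_mono) auto
  also have "\<dots> = exp (- 2 * ln (real (Suc k)))" using inv_sq_exp[of "real (Suc k)"] by (simp add: power_divide)
  finally show ?thesis .
qed

lemma sq_diff: "norm (a - c *\<^sub>R w) ^ 2 \<le> 2 * norm (a::real^'d) ^ 2 + 2 * c^2 * norm w ^ 2"
proof -
  have "norm (a - c *\<^sub>R w) \<le> norm a + \<bar>c\<bar> * norm w" using norm_triangle_ineq4[of a "c *\<^sub>R w"] by simp
  then have "norm (a - c *\<^sub>R w) ^ 2 \<le> (norm a + \<bar>c\<bar> * norm w) ^ 2" by (intro power_mono) auto
  also have "\<dots> \<le> 2 * norm a ^ 2 + 2 * c^2 * norm w ^ 2"
    using sum_squares_ge_zero[of "norm a - \<bar>c\<bar> * norm w" 0]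
    by (simp add: power2_eq_square algebra_simps)
  finally show ?thesis .
qed

lemma rdiff_bound: "norm (r (Suc (Suc k)) - r (Suc k)) ^ 2 \<le> 2 * norm (D (Suc k)) ^ 2 + 2 * norm wh ^ 2 * exp (- 2 * ln (real (Suc k)))"
proof -
  have "norm (r (Suc (Suc k)) - r (Suc k)) ^ 2 \<le> 2 * norm (D (Suc k)) ^ 2 + 2 * (dl k)^2 * norm wh ^ 2"
    unfolding rdiff by (rule sq_diff)
  also have "2 * (dl k)^2 * norm wh ^ 2 \<le> 2 * exp (- 2 * ln (real (Suc k))) * norm wh ^ 2"
    using dl_sq[of k] by (intro mult_right_mono) auto
  finally show ?thesis by (simp add: algebra_simps)
qed

lemma g_partial: "\<exists>C. \<forall>n. (\<Sum>k<n. g (Suc (Suc k)) - g (Suc k)) \<le> C"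
proof -
  obtain \<mu>p \<mu>m where mu: "\<mu>p > 0" "\<mu>m > 0" and ev: "eventually (\<lambda>k. Tt k \<le> (\<Sum>i\<in>UNIV. Bf \<mu>p \<mu>m i k)) sequentially"
    using T_eventually by blast
  define b where "b k = (\<Sum>i\<in>UNIV. Bf \<mu>p \<mu>m i k) + norm (D (Suc k)) ^ 2 + norm wh ^ 2 * exp (- 2 * ln (real (Suc k)))" for k
  have sD: "summable (\<lambda>k. norm (D (Suc k)) ^ 2)"
    using D_summable summable_Suc_iff[where f="\<lambda>k. norm (D k) ^ 2"] by simp
  have sb: "summable b" unfolding b_def
    using sD mu
    by (intro summable_add summable_sum Bf_summable summable_mult summ_exp) auto
  have b0: "b k \<ge> 0" for k unfolding b_def using Bf_nonneg by (intro add_nonneg_nonneg sum_nonneg) auto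
  have "eventually (\<lambda>k. g (Suc (Suc k)) - g (Suc k) \<le> b k) sequentially"
    using ev
  proof (rule eventually_mono)
    fix k assume "Tt k \<le> (\<Sum>i\<in>UNIV. Bf \<mu>p \<mu>m i k)"
    then show "g (Suc (Suc k)) - g (Suc k) \<le> b k"
      unfolding g_diff Tt_def[symmetric] b_def using rdiff_bound[of k] by (simp add: algebra_simps)
  qed
  then show ?thesis by (rule partial_sum_bound[OF sb b0])
qed


lemma g_bdd: "\<exists>G. \<forall>t\<ge>1. g t \<le> G"
proof -
  obtain C where C: "\<And>n. (\<Sum>k<n. g (Suc (Suc k)) - g (Suc k)) \<le> C" using g_partial by blast
  have "g t \<le> g 1 + C" if t1: "t \<ge> 1" for t
  proof -
    obtain j where j: "t = Suc j" using t1 by (cases t) auto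
    have "g (Suc j) - g (Suc 0) = (\<Sum>k<j. g (Suc (Suc k)) - g (Suc k))"
      using sum_lessThan_telescope[of "\<lambda>i. g (Suc i)" j] by simp
    then show ?thesis using C[of j] j by simp
  qed
  then show ?thesis by blast
qed

lemma partial_eq: "(\<Sum>t=1..T. g (t + 1) - g t) = g (T + 1) - g 1"
  by (induction T) simp_all

lemma S_eq: "(\<Sum>\<tau>=2..Suc j. (r \<tau> - r (\<tau> - 1)) \<bullet> (W \<tau> - W (\<tau> - 1))) =
   (\<Sum>k<j. (r (Suc (Suc k)) - r (Suc k)) \<bullet> D (Suc k))"
  by (induction j) (simp_all add: D_def)

lemma ab_bound: "\<bar>a \<bullet> b\<bar> \<le> (1/2) * norm a ^ 2 + (1/2) * norm (b::real^'d) ^ 2"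
proof -
  have "\<bar>a \<bullet> b\<bar> \<le> norm a * norm b" by (rule Cauchy_Schwarz_ineq2)
  also have "\<dots> \<le> (1/2) * norm a ^ 2 + (1/2) * norm b ^ 2"
    using sum_squares_ge_zero[of "norm a - norm b" 0] by (simp add: power2_eq_square algebra_simps)
  finally show ?thesis .
qed

lemma r_bdd: "\<exists>R. \<forall>t\<ge>1. norm (r t) \<le> R"
proof -
  obtain G where G: "\<And>t. t \<ge> 1 \<Longrightarrow> g t \<le> G" using g_bdd by blast
  define DB where "DB = sqrt (Lf w0 / \<kappa>)"
  have DB: "norm (D j) \<le> DB" for j
  proof -
    have "norm (D j) ^ 2 \<le> (\<Sum>k<Suc j. norm (D k) ^ 2)" by (rule member_le_sum) auto
    also have "\<dots> \<le> Lf w0 / \<kappa>" by (rule Dsum)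
    finally show ?thesis unfolding DB_def by (simp add: real_le_rsqrt)
  qed
  define s where "s k = 2 * norm (D (Suc k)) ^ 2 + norm wh ^ 2 * exp (- 2 * ln (real (Suc k)))" for k
  have sD: "summable (\<lambda>k. norm (D (Suc k)) ^ 2)"
    using D_summable summable_Suc_iff[where f="\<lambda>k. norm (D k) ^ 2"] by simp
  have ss: "summable s" unfolding s_def using sD by (intro summable_add summable_mult summ_exp) auto
  have s0: "s k \<ge> 0" for k by (simp add: s_def)
  define SB where "SB = suminf s"
  define b where "b = \<beta> / (1 - \<beta>)"
  have b0: "b \<ge> 0" using beta by (simp add: b_def)
  have Sb: "\<bar>\<Sum>k<j. (r (Suc (Suc k)) - r (Suc k)) \<bullet> D (Suc k)\<bar> \<le> SB" for j
  proof -
    have "\<bar>\<Sum>k<j. (r (Suc (Suc k)) - r (Suc k)) \<bullet> D (Suc k)\<bar> \<le> (\<Sum>k<j. \<bar>(r (Suc (Suc k)) - r (Suc k)) \<bullet> D (Suc k)\<bar>)"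
      by (rule sum_abs)
    also have "\<dots> \<le> (\<Sum>k<j. s k)"
    proof (rule sum_mono)
      fix k
      have "\<bar>(r (Suc (Suc k)) - r (Suc k)) \<bullet> D (Suc k)\<bar> \<le> (1/2) * norm (r (Suc (Suc k)) - r (Suc k)) ^ 2 + (1/2) * norm (D (Suc k)) ^ 2"
        by (rule ab_bound)
      moreover have "0 \<le> norm (D (Suc k)) ^ 2" by simp
      ultimately show "\<bar>(r (Suc (Suc k)) - r (Suc k)) \<bullet> D (Suc k)\<bar> \<le> s k"
        using rdiff_bound[of k] unfolding s_def by linarith
    qed
    also have "\<dots> \<le> SB" unfolding SB_def using ss s0 by (intro sum_le_suminf) auto
    finally show ?thesis .
  qed
  define A where "A = 2 * max 0 (G + b * SB)"
  define B where "B = 2 * b * DB"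
  have DB0: "DB \<ge> 0" using Lf_pos[of w0] Ls_facts by (simp add: DB_def)
  have "norm (r t) \<le> max 1 (A + B)" if t1: "t \<ge> 1" for t
  proof -
    obtain j where j: "t = Suc j" using t1 by (cases t) auto
    define x where "x = norm (r (Suc j))"
    define S where "S = (\<Sum>k<j. (r (Suc (Suc k)) - r (Suc k)) \<bullet> D (Suc k))"
    have gj: "g (Suc j) = (1/2) * x^2 + b * (r (Suc j) \<bullet> D j) - b * S"
      unfolding pot_g_def Let_def x_def S_def b_def using S_eq[of j] by (simp add: D_def)
    have "norm (r (Suc j)) * norm (D j) \<le> norm (r (Suc j)) * DB" by (rule mult_left_mono[OF DB]) simp
    then have "\<bar>r (Suc j) \<bullet> D j\<bar> \<le> x * DB"
      using Cauchy_Schwarz_ineq2[of "r (Suc j)" "D j"] unfolding x_def by linarith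
    then have "- (x * DB) \<le> r (Suc j) \<bullet> D j" by linarith
    then have "b * (- (x * DB)) \<le> b * (r (Suc j) \<bullet> D j)" using b0 by (rule mult_left_mono)
    then have "b * (r (Suc j) \<bullet> D j) \<ge> - (b * (x * DB))" by simp
    moreover have "b * S \<le> b * SB" using Sb[of j] b0 by (intro mult_left_mono) (auto simp: S_def)
    moreover have "g (Suc j) \<le> G" using G by simp
    ultimately have "(1/2) * x^2 \<le> G + b * SB + b * (x * DB)" using gj by linarith
    then have "x^2 \<le> 2 * (G + b * SB) + B * x" unfolding B_def by (simp add: algebra_simps)
    moreover have "2 * (G + b * SB) \<le> A" unfolding A_def by (simp add: max_def)
    ultimately have "x^2 \<le> A + B * x" by linarith
    then have "x \<le> max 1 (A + B)" using b0 DB0 by (intro quad) (auto simp: x_def A_def B_def)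
    then show ?thesis using j by (simp add: x_def)
  qed
  then show ?thesis by blast
qed

end

theorem lemma2:
  fixes X :: "'n::finite \<Rightarrow> real^'d"
    and l l' :: "real \<Rightarrow> real"
    and \<beta> \<eta> :: real
    and w0 wt :: "real^'d"
    and v :: "'n \<Rightarrow> real"
  assumes A1: "\<exists>w. \<forall>i. w \<bullet> X i > 0"
    and A2_deriv: "\<And>x. (l has_real_derivative l' x) (at x)"
    and A2_neg: "\<And>x. l' x < 0"
    and A2_lim: "(l \<longlongrightarrow> 0) at_top" "(l' \<longlongrightarrow> 0) at_top"
    and A2_limsup: "Limsup at_bot (\<lambda>x. ereal (l' x)) < 0"
    and A2_upper: "\<exists>\<mu>p xp. \<mu>p > 0 \<and> xp > 0 \<and>
                     (\<forall>x>xp. - l' x \<le> (1 + exp (- \<mu>p * x)) * exp (- x))"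
    and A2_lower: "\<exists>\<mu>m xm. \<mu>m > 0 \<and> xm > 0 \<and>
                     (\<forall>x>xm. - l' x \<ge> (1 - exp (- \<mu>m * x)) * exp (- x))"
    and A3: "\<And>s0. \<exists>C. \<forall>x y. x \<ge> s0 \<longrightarrow> y \<ge> s0 \<longrightarrow> \<bar>l' x - l' y\<bar> \<le> C * \<bar>x - y\<bar>"
    and beta: "0 \<le> \<beta>" "\<beta> < 1"
    and eta_pos: "0 < \<eta>"
    and eta_bound: "\<eta> < 2 * real CARD('n) /
          (sigma_max X ^ 2 * lip_H l' (inv l (real CARD('n) * emp_loss l X (gdm_w l' X \<beta> \<eta> w0 1))))"
    and generic_indep: "\<And>I c. card I \<le> CARD('d) \<Longrightarrow> (\<Sum>i\<in>I. c i *\<^sub>R X i) = 0 \<Longrightarrow> \<forall>i\<in>I. c i = 0"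
    and generic_v: "max_margin X = (\<Sum>i\<in>UNIV. v i *\<^sub>R X i)"
                   "\<And>i. i \<in> support_set X \<Longrightarrow> v i > 0"
                   "\<And>i. i \<notin> support_set X \<Longrightarrow> v i = 0"
    and wt: "\<And>i. i \<in> support_set X \<Longrightarrow> (\<eta> / real CARD('n)) * exp (- (X i \<bullet> wt)) = v i"
  shows "(bdd_above ((\<lambda>t. norm (res_r l' X \<beta> \<eta> w0 wt t)) ` {1..})
             \<longleftrightarrow> bdd_above (pot_g l' X \<beta> \<eta> w0 wt ` {1..}))
         \<and> bdd_above ((\<lambda>T. \<Sum>t=1..T. pot_g l' X \<beta> \<eta> w0 wt (t + 1) - pot_g l' X \<beta> \<eta> w0 wt t) ` {1..})
         \<and> bdd_above (pot_g l' X \<beta> \<eta> w0 wt ` {1..})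
         \<and> bdd_above ((\<lambda>t. norm (res_r l' X \<beta> \<eta> w0 wt t)) ` {1..})"
  proof -
  interpret setting l l' X \<beta> \<eta> w0 wt v
    by (unfold_locales) (use A1 A2_deriv A2_neg A2_lim A2_limsup A3 A2_upper A2_lower beta eta_pos eta_bound generic_v wt in auto)
  obtain R where R: "\<And>t. t \<ge> 1 \<Longrightarrow> norm (res_r l' X \<beta> \<eta> w0 wt t) \<le> R" using r_bdd by blast
  obtain G where G: "\<And>t. t \<ge> 1 \<Longrightarrow> pot_g l' X \<beta> \<eta> w0 wt t \<le> G" using g_bdd by blast
  have P: "bdd_above ((\<lambda>t. norm (res_r l' X \<beta> \<eta> w0 wt t)) ` {1..})"
    by (rule bdd_aboveI2[where M=R]) (use R in auto)
  have Q: "bdd_above (pot_g l' X \<beta> \<eta> w0 wt ` {1..})"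
    by (rule bdd_aboveI2[where M=G]) (use G in auto)
  have S: "bdd_above ((\<lambda>T. \<Sum>t=1..T. pot_g l' X \<beta> \<eta> w0 wt (t + 1) - pot_g l' X \<beta> \<eta> w0 wt t) ` {1..})"
  proof (rule bdd_aboveI2[where M="G - pot_g l' X \<beta> \<eta> w0 wt 1"])
    fix T :: nat assume "T \<in> {1..}"
    show "(\<Sum>t=1..T. pot_g l' X \<beta> \<eta> w0 wt (t + 1) - pot_g l' X \<beta> \<eta> w0 wt t) \<le> G - pot_g l' X \<beta> \<eta> w0 wt 1"
      unfolding partial_eq using G[of "T + 1"] by simp
  qed
  show ?thesis using P Q S by blast
qed

end
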